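(* Let $G$ be a finitely generated, residually finite group and $H<G$ a subgroup of finite index. If every finite quotient of $H$ is also a quotient of $G$, then there is a continuous surjection $\widehat{G}\twoheadrightarrow\widehat{H}$ with finite kernel.
   Context: $\widehat{G}$ denotes the profinite completion of $G$, i.e. the inverse limit of the finite quotients of $G$. *)

theory Defs
  imports "HOL-Algebra.Algebra" "HOL-Analysis.Function_Topology"
begin

definition fin_generated :: "('a, 'b) monoid_scheme \<Rightarrow> bool" where
  "fin_generated G \<longleftrightarrow> (\<exists>S. finite S \<and> S \<subseteq> carrier G \<and> generate G S = carrier G)"

definition fin_index_normals :: "('a, 'b) monoid_scheme \<Rightarrow> 'a set set" where
  "fin_index_normals G = {N. N \<lhd> G \<and> finite (rcosets\<^bsub>G\<^esub> N)}"

definition residually_finite :: "('a, 'b) monoid_scheme \<Rightarrow> bool" where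
  "residually_finite G \<longleftrightarrow>
     (\<forall>g\<in>carrier G. g \<noteq> \<one>\<^bsub>G\<^esub> \<longrightarrow> (\<exists>N\<in>fin_index_normals G. g \<notin> N))"

text \<open>Profinite completion: the inverse limit of the finite quotients G/N,
  realised as compatible families of cosets (x N \<in> G/N), extensional outside
  the index set.\<close>
definition profinite_carrier :: "('a, 'b) monoid_scheme \<Rightarrow> ('a set \<Rightarrow> 'a set) set" where
  "profinite_carrier G =
     {x \<in> (\<Pi>\<^sub>E N\<in>fin_index_normals G. rcosets\<^bsub>G\<^esub> N).
        \<forall>N\<in>fin_index_normals G. \<forall>M\<in>fin_index_normals G. N \<subseteq> M \<longrightarrow> x N \<subseteq> x M}"

definition profinite_completion :: "('a, 'b) monoid_scheme \<Rightarrow> ('a set \<Rightarrow> 'a set) monoid" where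
  "profinite_completion G =
     \<lparr>carrier = profinite_carrier G,
      monoid.mult = (\<lambda>x y. restrict (\<lambda>N. x N <#>\<^bsub>G\<^esub> y N) (fin_index_normals G)),
      monoid.one = restrict (\<lambda>N. N) (fin_index_normals G)\<rparr>"

definition profinite_topology :: "('a, 'b) monoid_scheme \<Rightarrow> ('a set \<Rightarrow> 'a set) topology" where
  "profinite_topology G =
     subtopology
       (product_topology (\<lambda>N. discrete_topology (rcosets\<^bsub>G\<^esub> N)) (fin_index_normals G))
       (profinite_carrier G)"

end

theory Submission
  imports Defs
begin

lemma set_mult_upd[simp]: "set_mult (G\<lparr>carrier := H\<rparr>) = set_mult G"
  by (simp add: set_mult_def fun_eq_iff)
lemma r_coset_upd[simp]: "r_coset (G\<lparr>carrier := H\<rparr>) = r_coset G"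
  by (simp add: r_coset_def fun_eq_iff)
lemma rcosets_upd: "rcosets\<^bsub>G\<lparr>carrier := H\<rparr>\<^esub> N = (\<Union>a\<in>H. {N #>\<^bsub>G\<^esub> a})"
  by (simp add: RCOSETS_def)

context group begin

lemma rcosetsI': "subgroup N G \<Longrightarrow> a \<in> carrier G \<Longrightarrow> N #> a \<in> rcosets N"
  by (rule rcosetsI[OF subgroup.subset])

lemma rcosets_elim: "c \<in> rcosets N \<Longrightarrow> (\<And>a. a \<in> carrier G \<Longrightarrow> c = N #> a \<Longrightarrow> P) \<Longrightarrow> P"
  by (auto simp: RCOSETS_def)

lemma coset_eq_iff:
  assumes "subgroup N G" "a \<in> carrier G" "b \<in> carrier G"
  shows "N #> a = N #> b \<longleftrightarrow> a \<otimes> inv b \<in> N"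
proof
  assume "N #> a = N #> b"
  then have "a \<in> N #> b" using rcos_self[OF assms(2,1)] by simp
  then show "a \<otimes> inv b \<in> N" using subgroup.rcos_module_imp[OF assms(1) is_group assms(3)] by blast
next
  assume "a \<otimes> inv b \<in> N"
  then have "a \<in> N #> b" using subgroup.rcos_module_rev[OF assms(1) is_group assms(3,2)] by blast
  then show "N #> a = N #> b" using repr_independence[OF _ assms(3,1)] by simp
qed

lemma subgroup_mult_sub:
  assumes "subgroup L G" "subgroup N G" "L \<subseteq> N" shows "N <#> L = N"
proof
  show "N <#> L \<subseteq> N" using assms
    by (auto simp: set_mult_def intro: subgroup.m_closed)
  show "N \<subseteq> N <#> L"
  proof
    fix x assume "x \<in> N"
    then have "x = x \<otimes> \<one>" using assms subgroup.mem_carrier by (metis r_one)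
    moreover have "\<one> \<in> L" using assms subgroup.one_closed by blast
    ultimately show "x \<in> N <#> L" using \<open>x \<in> N\<close> unfolding set_mult_def by blast
  qed
qed

lemma setmult_coset_absorb:
  "subgroup L G \<Longrightarrow> subgroup N G \<Longrightarrow> L \<subseteq> N \<Longrightarrow> a \<in> carrier G \<Longrightarrow> N <#> (L #> a) = N #> a"
  by (simp add: setmult_rcos_assoc subgroup.subset subgroup_mult_sub)

lemma coset_subset_eq:
  assumes "subgroup L G" "subgroup N G" "L \<subseteq> N" "a \<in> carrier G" "b \<in> carrier G" "L #> a \<subseteq> N #> b"
  shows "N #> a = N #> b"
proof -
  have "a \<in> N #> b" using rcos_self[OF assms(4,1)] assms(6) by blast
  then show ?thesis using repr_independence[OF _ assms(5,2)] by simp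
qed

lemma rcosets_subset_carrier: "subgroup N G \<Longrightarrow> c \<in> rcosets N \<Longrightarrow> c \<subseteq> carrier G"
  by (force elim!: rcosets_elim simp: r_coset_def intro: subgroup.mem_carrier)

lemma rcosets_nonempty: "subgroup N G \<Longrightarrow> c \<in> rcosets N \<Longrightarrow> c \<noteq> {}"
  by (auto elim!: rcosets_elim dest: rcos_self)

lemma finite_rcosets_Inter:
  assumes F: "finite F" "F \<noteq> {}" and sg: "\<And>N. N \<in> F \<Longrightarrow> subgroup N G" 
    and fi: "\<And>N. N \<in> F \<Longrightarrow> finite (rcosets N)"
  shows "finite (rcosets (\<Inter>F))"
proof -
  have sI: "subgroup (\<Inter>F) G" using subgroups_Inter[OF sg F(2)] by blast
  let ?f = "\<lambda>c. \<lambda>N\<in>F. N <#> c"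
  have img: "?f ` (rcosets (\<Inter>F)) \<subseteq> (\<Pi>\<^sub>E N\<in>F. rcosets N)"
  proof
    fix y assume "y \<in> ?f ` (rcosets (\<Inter>F))"
    then obtain a where a: "a \<in> carrier G" "y = ?f (\<Inter>F #> a)" by (auto elim!: rcosets_elim)
    have "\<And>N. N \<in> F \<Longrightarrow> N <#> (\<Inter>F #> a) = N #> a"
      using setmult_coset_absorb[OF sI sg _ a(1)] by blast
    then show "y \<in> (\<Pi>\<^sub>E N\<in>F. rcosets N)" using a by (auto intro!: rcosetsI subgroup.subset sg)
  qed
  have inj: "inj_on ?f (rcosets (\<Inter>F))"
  proof (rule inj_onI)
    fix c d assume c: "c \<in> rcosets (\<Inter>F)" and d: "d \<in> rcosets (\<Inter>F)" and eq: "?f c = ?f d"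
    obtain a where a: "a \<in> carrier G" "c = \<Inter>F #> a" using c by (auto elim!: rcosets_elim)
    obtain b where b: "b \<in> carrier G" "d = \<Inter>F #> b" using d by (auto elim!: rcosets_elim)
    have "\<And>N. N \<in> F \<Longrightarrow> a \<otimes> inv b \<in> N"
    proof -
      fix N assume N: "N \<in> F"
      have "N <#> c = N <#> d" using eq N by (metis restrict_apply')
      then have "N #> a = N #> b" using setmult_coset_absorb[OF sI sg[OF N] _] a b N by auto
      then show "a \<otimes> inv b \<in> N" using coset_eq_iff[OF sg[OF N] a(1) b(1)] by simp
    qed
    then show "c = d" using coset_eq_iff[OF sI a(1) b(1)] a b by auto
  qed
  show ?thesis by (rule inj_on_finite[OF inj img]) (simp add: F fi finite_PiE)
qed

lemma rep_in: "subgroup N G \<Longrightarrow> c \<in> rcosets N \<Longrightarrow> (SOME x. x \<in> c) \<in> c"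
  using rcosets_nonempty by (metis some_in_eq)

lemma index_tower:
  assumes A: "subgroup A G" and B: "subgroup B G" and AB: "A \<subseteq> B"
    and f1: "finite (rcosets\<^bsub>G\<lparr>carrier := B\<rparr>\<^esub> A)" and f2: "finite (rcosets B)"
  shows "finite (rcosets A) \<and> card (rcosets A) \<le> card (rcosets\<^bsub>G\<lparr>carrier := B\<rparr>\<^esub> A) * card (rcosets B)"
proof -
  define rep where "rep c = (SOME x. x \<in> c)" for c :: "'a set"
  let ?g = "\<lambda>(c1, c2). A #> (rep c1 \<otimes> rep c2)"
  have sub: "rcosets A \<subseteq> ?g ` ((rcosets\<^bsub>G\<lparr>carrier := B\<rparr>\<^esub> A) \<times> (rcosets B))"
  proof
    fix c assume "c \<in> rcosets A"
    then obtain g where g: "g \<in> carrier G" "c = A #> g" by (auto elim!: rcosets_elim)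
    define c2 where "c2 = B #> g"
    have c2: "c2 \<in> rcosets B" using g B by (simp add: c2_def rcosetsI subgroup.subset)
    define t where "t = rep c2"
    have t: "t \<in> B #> g" using rep_in[OF B c2] by (simp add: t_def rep_def c2_def)
    have tG: "t \<in> carrier G" using r_coset_subset_G[OF subgroup.subset[OF B] g(1)] t by blast
    define h1 where "h1 = t \<otimes> inv g"
    have h1: "h1 \<in> B" unfolding h1_def by (rule subgroup.rcos_module_imp[OF B is_group g(1) t])
    have h1G: "h1 \<in> carrier G" by (rule subgroup.mem_carrier[OF B h1])
    define c1 where "c1 = A #> inv h1"
    have "inv h1 \<in> B" using h1 B by (simp add: subgroup.m_inv_closed)
    then have c1: "c1 \<in> rcosets\<^bsub>G\<lparr>carrier := B\<rparr>\<^esub> A" 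
      unfolding rcosets_upd c1_def by blast
    define r where "r = rep c1"
    have "r \<in> A #> inv h1"
      using rep_in[OF A, of c1] c1_def h1G A by (simp add: r_def rep_def rcosetsI subgroup.subset)
    then have rh: "r \<otimes> h1 \<in> A" 
      using subgroup.rcos_module_imp[OF A is_group, of "inv h1" r] h1G by simp
    have rG: "r \<in> carrier G" using r_coset_subset_G[OF subgroup.subset[OF A] inv_closed[OF h1G]] \<open>r \<in> A #> inv h1\<close> by blast
    have "r \<otimes> t \<otimes> inv g = r \<otimes> h1" using rG tG g by (simp add: h1_def m_assoc)
    then have "A #> (r \<otimes> t) = A #> g" using coset_eq_iff[OF A _ g(1), of "r \<otimes> t"] rh rG tG by simp
    then have "c = ?g (c1, c2)" using g by (simp add: r_def t_def)
    then show "c \<in> ?g ` ((rcosets\<^bsub>G\<lparr>carrier := B\<rparr>\<^esub> A) \<times> (rcosets B))" using c1 c2 by blast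
  qed
  have "finite (?g ` ((rcosets\<^bsub>G\<lparr>carrier := B\<rparr>\<^esub> A) \<times> (rcosets B)))" using f1 f2 by simp
  moreover have "card (?g ` ((rcosets\<^bsub>G\<lparr>carrier := B\<rparr>\<^esub> A) \<times> (rcosets B))) \<le> card (rcosets\<^bsub>G\<lparr>carrier := B\<rparr>\<^esub> A) * card (rcosets B)"
    using card_image_le[of "(rcosets\<^bsub>G\<lparr>carrier := B\<rparr>\<^esub> A) \<times> (rcosets B)" ?g] f1 f2 by (simp add: card_cartesian_product)
  ultimately show ?thesis using sub card_mono[OF _ sub] finite_subset[OF sub] by linarith
qed

lemma index_mono:
  assumes A: "subgroup A G" and B: "subgroup B G" and AB: "A \<subseteq> B" and f: "finite (rcosets A)"
  shows "finite (rcosets B) \<and> card (rcosets B) \<le> card (rcosets A)"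
proof -
  have "rcosets B = (\<lambda>c. B <#> c) ` (rcosets A)"
  proof
    show "rcosets B \<subseteq> (\<lambda>c. B <#> c) ` (rcosets A)"
    proof
      fix c assume "c \<in> rcosets B"
      then obtain a where a: "a \<in> carrier G" "c = B #> a" by (auto elim!: rcosets_elim)
      then have "c = B <#> (A #> a)" using setmult_coset_absorb[OF A B AB a(1)] by simp
      moreover have "A #> a \<in> rcosets A" using rcosetsI'[OF A a(1)] .
      ultimately show "c \<in> (\<lambda>c. B <#> c) ` (rcosets A)" by blast
    qed
    show "(\<lambda>c. B <#> c) ` (rcosets A) \<subseteq> rcosets B"
      using setmult_coset_absorb[OF A B AB] rcosetsI'[OF B] by (auto elim!: rcosets_elim)
  qed
  then show ?thesis using f by (simp add: card_image_le)
qed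

lemma index_inter:
  assumes A: "subgroup A G" and B: "subgroup B G" and f: "finite (rcosets A)"
  shows "finite (rcosets\<^bsub>G\<lparr>carrier := B\<rparr>\<^esub> (A \<inter> B)) \<and> card (rcosets\<^bsub>G\<lparr>carrier := B\<rparr>\<^esub> (A \<inter> B)) \<le> card (rcosets A)"
proof -
  have AB: "subgroup (A \<inter> B) G" using subgroups_Inter_pair[OF A B] .
  let ?f = "\<lambda>c. A <#> c"
  have img: "?f ` (rcosets\<^bsub>G\<lparr>carrier := B\<rparr>\<^esub> (A \<inter> B)) \<subseteq> rcosets A"
  proof
    fix y assume "y \<in> ?f ` (rcosets\<^bsub>G\<lparr>carrier := B\<rparr>\<^esub> (A \<inter> B))"
    then obtain a where a: "a \<in> B" "y = A <#> ((A \<inter> B) #> a)" by (auto simp: rcosets_upd)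
    have aG: "a \<in> carrier G" by (rule subgroup.mem_carrier[OF B a(1)])
    show "y \<in> rcosets A" using a setmult_coset_absorb[OF AB A _ aG] rcosetsI'[OF A aG] by auto
  qed
  have inj: "inj_on ?f (rcosets\<^bsub>G\<lparr>carrier := B\<rparr>\<^esub> (A \<inter> B))"
  proof (rule inj_onI)
    fix c d assume c: "c \<in> rcosets\<^bsub>G\<lparr>carrier := B\<rparr>\<^esub> (A \<inter> B)" and d: "d \<in> rcosets\<^bsub>G\<lparr>carrier := B\<rparr>\<^esub> (A \<inter> B)"
      and eq: "?f c = ?f d"
    obtain a where a: "a \<in> B" "c = (A \<inter> B) #> a" using c by (auto simp: rcosets_upd)
    obtain b where b: "b \<in> B" "d = (A \<inter> B) #> b" using d by (auto simp: rcosets_upd)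
    have aG: "a \<in> carrier G" and bG: "b \<in> carrier G" using subgroup.mem_carrier[OF B a(1)] subgroup.mem_carrier[OF B b(1)] by auto
    have "A #> a = A #> b" using eq a b setmult_coset_absorb[OF AB A] aG bG by auto
    then have "a \<otimes> inv b \<in> A" using coset_eq_iff[OF A aG bG] by simp
    moreover have "a \<otimes> inv b \<in> B" using a b B by (simp add: subgroup.m_closed subgroup.m_inv_closed)
    ultimately show "c = d" using coset_eq_iff[OF AB aG bG] a b by auto
  qed
  show ?thesis using inj_on_finite[OF inj img f] card_inj_on_le[OF inj img f] by simp
qed

lemma kernel_fin_index:
  assumes T: "group T" and h: "\<phi> \<in> hom G T" and f: "finite (carrier T)"
  shows "kernel G T \<phi> \<lhd> G" "finite (rcosets (kernel G T \<phi>))"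
    "card (rcosets (kernel G T \<phi>)) \<le> card (carrier T)"
    "\<phi> ` carrier G = carrier T \<Longrightarrow> card (rcosets (kernel G T \<phi>)) = card (carrier T)"
proof -
  interpret gh: group_hom G T \<phi> using T h by (simp add: group_hom_def group_hom_axioms_def is_group)
  show "kernel G T \<phi> \<lhd> G" by (rule gh.normal_kernel)
  have inj: "inj_on (\<lambda>Z. the_elem (\<phi> ` Z)) (rcosets (kernel G T \<phi>))" 
    using gh.FactGroup_inj_on by (simp add: FactGroup_def)
  have img: "(\<lambda>Z. the_elem (\<phi> ` Z)) ` (rcosets (kernel G T \<phi>)) \<subseteq> carrier T"
    using hom_carrier[OF gh.FactGroup_hom] by (simp add: FactGroup_def)
  show "finite (rcosets (kernel G T \<phi>))" using inj_on_finite[OF inj img f] .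
  show "card (rcosets (kernel G T \<phi>)) \<le> card (carrier T)" using card_inj_on_le[OF inj img f] .
  assume "\<phi> ` carrier G = carrier T"
  then have "bij_betw (\<lambda>Z. the_elem (\<phi> ` Z)) (rcosets (kernel G T \<phi>)) (carrier T)"
    using gh.FactGroup_iso_set by (simp add: iso_def FactGroup_def)
  then show "card (rcosets (kernel G T \<phi>)) = card (carrier T)" by (rule bij_betw_same_card)
qed

end


fun down :: "(nat \<Rightarrow> 'x \<Rightarrow> 'x) \<Rightarrow> nat \<Rightarrow> nat \<Rightarrow> 'x \<Rightarrow> 'x" where
  "down p 0 n y = y"
| "down p (Suc k) n y = p n (down p k (Suc n) y)"

lemma down_in:
  assumes "\<And>n x. x \<in> A (Suc n) \<Longrightarrow> p n x \<in> A n"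
  shows "y \<in> A (m + k) \<Longrightarrow> down p k m y \<in> A m"
proof (induction k arbitrary: m y)
  case 0 then show ?case by simp
next
  case (Suc k)
  then have "down p k (Suc m) y \<in> A (Suc m)" by simp
  then show ?case using assms by simp
qed

lemma down_add: "down p (k + j) n y = down p k n (down p j (n + k) y)"
  by (induction k arbitrary: n) auto

definition good :: "(nat \<Rightarrow> 'x set) \<Rightarrow> (nat \<Rightarrow> 'x \<Rightarrow> 'x) \<Rightarrow> nat \<Rightarrow> 'x \<Rightarrow> bool" where
  "good A p n x \<longleftrightarrow> x \<in> A n \<and> (\<forall>k. \<exists>y\<in>A (n + k). down p k n y = x)"

lemma good_exists:
  assumes maps: "\<And>n x. x \<in> A (Suc n) \<Longrightarrow> p n x \<in> A n"
    and C: "finite C" "C \<subseteq> A m" and hyp: "\<And>k. \<exists>y\<in>A (m + k). down p k m y \<in> C"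
  shows "\<exists>c\<in>C. good A p m c"
proof (rule ccontr)
  assume nog: "\<not> (\<exists>c\<in>C. good A p m c)"
  have "\<forall>c\<in>C. \<exists>k. \<not> (\<exists>y\<in>A (m + k). down p k m y = c)"
    using nog C(2) unfolding good_def by blast
  then obtain kk where kk: "\<And>c. c \<in> C \<Longrightarrow> \<not> (\<exists>y\<in>A (m + kk c). down p (kk c) m y = c)"
    by metis
  define K where "K = Max (kk ` C)"
  obtain y where y: "y \<in> A (m + K)" "down p K m y \<in> C" using hyp by blast
  define c where "c = down p K m y"
  have cC: "c \<in> C" using y c_def by simp
  have le: "kk c \<le> K" unfolding K_def using C(1) cC by simp
  define y' where "y' = down p (K - kk c) (m + kk c) y"
  have "y' \<in> A (m + kk c)" unfolding y'_def
    using down_in[where A=A and p=p, OF maps, where y=y and m="m + kk c" and k="K - kk c"] y(1) le by simp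
  moreover have "down p (kk c) m y' = down p K m y"
    unfolding y'_def using down_add[of p "kk c" "K - kk c" m y] le by simp
  then have "down p (kk c) m y' = c" using c_def by simp
  ultimately show False using kk[OF cC] by blast
qed

lemma good_child:
  assumes maps: "\<And>n x. x \<in> A (Suc n) \<Longrightarrow> p n x \<in> A n"
    and fin: "\<And>n. finite (A n)" and g: "good A p n x"
  shows "\<exists>c. good A p (Suc n) c \<and> p n c = x"
proof -
  have "\<exists>c\<in>{c\<in>A (Suc n). p n c = x}. good A p (Suc n) c"
  proof (rule good_exists[OF maps])
    show "finite {c\<in>A (Suc n). p n c = x}" using fin by simp
    show "{c\<in>A (Suc n). p n c = x} \<subseteq> A (Suc n)" by blast
    fix k
    obtain y where y: "y \<in> A (n + Suc k)" "down p (Suc k) n y = x" using g unfolding good_def by blast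
    have "down p k (Suc n) y \<in> A (Suc n)" using down_in[where A=A and p=p, OF maps, where y=y and m="Suc n" and k=k] y(1) by simp
    then show "\<exists>y\<in>A (Suc n + k). down p k (Suc n) y \<in> {c\<in>A (Suc n). p n c = x}"
      using y by (intro bexI[of _ y]) auto
  qed
  then show ?thesis by blast
qed

lemma koenig:
  assumes fin: "\<And>n. finite (A n)" and ne: "\<And>n. A n \<noteq> {}"
    and maps: "\<And>n x. x \<in> A (Suc n) \<Longrightarrow> p n x \<in> A n"
  shows "\<exists>a. \<forall>n. a n \<in> A n \<and> p n (a (Suc n)) = a n"
proof -
  have "\<exists>c\<in>A 0. good A p 0 c"
  proof (rule good_exists[OF maps fin])
    show "A 0 \<subseteq> A 0" by simp
    fix k
    obtain y where "y \<in> A k" using ne by blast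
    then have "y \<in> A (0 + k)" by simp
    then have "down p k 0 y \<in> A 0" using down_in[where A=A and p=p and m=0 and k=k and y=y] maps by blast
    then show "\<exists>y\<in>A (0 + k). down p k 0 y \<in> A 0" using \<open>y \<in> A (0 + k)\<close> by blast
  qed
  then obtain x0 where x0: "good A p 0 x0" by blast
  define a where "a = rec_nat x0 (\<lambda>n an. SOME c. good A p (Suc n) c \<and> p n c = an)"
  have a0: "a 0 = x0" and aS: "\<And>n. a (Suc n) = (SOME c. good A p (Suc n) c \<and> p n c = a n)"
    by (simp_all add: a_def)
  have ga: "good A p n (a n)" for n
  proof (induction n)
    case 0 then show ?case using x0 a0 by simp
  next
    case (Suc n)
    then show ?case using someI_ex[OF good_child[OF maps fin Suc]] aS by simp
  qed
  have "p n (a (Suc n)) = a n" for n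
    using someI_ex[OF good_child[OF maps fin ga[of n]]] aS by simp
  moreover have "a n \<in> A n" for n using ga[of n] unfolding good_def by simp
  ultimately show ?thesis by blast
qed


definition tact :: "('a,'b) monoid_scheme \<Rightarrow> nat \<Rightarrow> (nat \<Rightarrow> 'a set) \<Rightarrow> 'a \<Rightarrow> nat \<Rightarrow> nat" where
  "tact G k e g i = inv_into {..<k} e (r_coset G (e i) g)"

context group begin

lemma tact_props:
  assumes N: "subgroup N G" and e: "bij_betw e {..<k} (rcosets N)" and i: "i < k" and g: "g \<in> carrier G"
  shows "tact G k e g i < k" "e (tact G k e g i) = e i #> g"
proof -
  have "e i \<in> rcosets N" using e i bij_betwE by blast
  then obtain a where a: "a \<in> carrier G" "e i = N #> a" by (rule rcosets_elim)
  have "e i #> g = N #> (a \<otimes> g)" using coset_mult_assoc[OF subgroup.subset[OF N] a(1) g] a by simp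
  then have mem: "e i #> g \<in> rcosets N" using rcosetsI'[OF N] a g by simp
  then have m: "e i #> g \<in> e ` {..<k}" using e by (simp add: bij_betw_def)
  show "tact G k e g i < k" "e (tact G k e g i) = e i #> g" unfolding tact_def
    using inv_into_into[OF m] f_inv_into_f[OF m] by simp_all
qed

lemma tact_ei_carrier:
  assumes N: "subgroup N G" and e: "bij_betw e {..<k} (rcosets N)" and i: "i < k"
  shows "e i \<subseteq> carrier G"
  using rcosets_subset_carrier[OF N] e i bij_betwE by blast

lemma tact_one:
  assumes N: "subgroup N G" and e: "bij_betw e {..<k} (rcosets N)" and i: "i < k"
  shows "tact G k e \<one> i = i"
proof -
  have "e i #> \<one> = e i" using tact_ei_carrier[OF N e i] by simp
  then show ?thesis unfolding tact_def using e i by (simp add: bij_betw_def inv_into_f_f)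
qed

lemma tact_mult:
  assumes N: "subgroup N G" and e: "bij_betw e {..<k} (rcosets N)" and i: "i < k"
    and g: "g \<in> carrier G" and h: "h \<in> carrier G"
  shows "tact G k e (g \<otimes> h) i = tact G k e h (tact G k e g i)"
proof -
  have "e (tact G k e g i) #> h = e i #> (g \<otimes> h)"
    using tact_props[OF N e i g] coset_mult_assoc[OF tact_ei_carrier[OF N e i] g h] by simp
  then show ?thesis unfolding tact_def by simp
qed

lemma tact_inv:
  assumes N: "subgroup N G" and e: "bij_betw e {..<k} (rcosets N)" and i: "i < k" and j: "j < k"
    and s: "s \<in> carrier G"
  shows "tact G k e (inv s) i = j \<longleftrightarrow> tact G k e s j = i"
proof
  have inj: "inj_on e {..<k}" using e by (simp add: bij_betw_def)
  assume "tact G k e (inv s) i = j"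
  then have "e j = e i #> inv s" using tact_props[OF N e i inv_closed[OF s]] by simp
  then have "e j #> s = e i"
    using coset_mult_assoc[OF tact_ei_carrier[OF N e i] inv_closed[OF s] s] tact_ei_carrier[OF N e i] s
    by simp
  then have "e (tact G k e s j) = e i" using tact_props[OF N e j s] by simp
  then show "tact G k e s j = i" using inj tact_props[OF N e j s] i by (simp add: inj_on_eq_iff)
next
  have inj: "inj_on e {..<k}" using e by (simp add: bij_betw_def)
  assume "tact G k e s j = i"
  then have "e i = e j #> s" using tact_props[OF N e j s] by simp
  then have "e i #> inv s = e j"
    using coset_mult_assoc[OF tact_ei_carrier[OF N e j] s inv_closed[OF s]] tact_ei_carrier[OF N e j] s
    by simp
  then have "e (tact G k e (inv s) i) = e j" using tact_props[OF N e i inv_closed[OF s]] by simp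
  then show "tact G k e (inv s) i = j" using inj tact_props[OF N e i inv_closed[OF s]] j
    by (simp add: inj_on_eq_iff)
qed

lemma tact_base:
  assumes N: "subgroup N G" and e: "bij_betw e {..<k} (rcosets N)"
  shows "inv_into {..<k} e N < k" "e (inv_into {..<k} e N) = N"
proof -
  have "N \<in> rcosets N" using rcosetsI'[OF N one_closed] subgroup.subset[OF N] by simp
  then have m: "N \<in> e ` {..<k}" using e by (simp add: bij_betw_def)
  show "inv_into {..<k} e N < k" "e (inv_into {..<k} e N) = N"
    using inv_into_into[OF m] f_inv_into_f[OF m] by simp_all
qed

lemma tact_mem:
  assumes N: "subgroup N G" and e: "bij_betw e {..<k} (rcosets N)" and g: "g \<in> carrier G"
  shows "g \<in> N \<longleftrightarrow> tact G k e g (inv_into {..<k} e N) = inv_into {..<k} e N"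
proof -
  let ?i = "inv_into {..<k} e N"
  have inj: "inj_on e {..<k}" using e by (simp add: bij_betw_def)
  have "tact G k e g ?i = ?i \<longleftrightarrow> e (tact G k e g ?i) = e ?i"
    using inj tact_props(1)[OF N e tact_base(1)[OF N e] g] tact_base(1)[OF N e] by (simp add: inj_on_eq_iff)
  also have "\<dots> \<longleftrightarrow> N #> g = N" using tact_props(2)[OF N e tact_base(1)[OF N e] g] tact_base(2)[OF N e] by simp
  also have "\<dots> \<longleftrightarrow> g \<in> N" using coset_join1[OF _ g N] coset_join2[OF g N] by blast
  finally show ?thesis by simp
qed

lemma perm_determines:
  assumes N1: "subgroup N1 G" and e1: "bij_betw e1 {..<k} (rcosets N1)"
    and N2: "subgroup N2 G" and e2: "bij_betw e2 {..<k} (rcosets N2)"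
    and base: "inv_into {..<k} e1 N1 = inv_into {..<k} e2 N2"
    and S: "S \<subseteq> carrier G" "generate G S = carrier G"
    and dat: "\<And>s i. s \<in> S \<Longrightarrow> i < k \<Longrightarrow> tact G k e1 s i = tact G k e2 s i"
  shows "N1 = N2"
proof -
  have key: "\<forall>i<k. tact G k e1 g i = tact G k e2 g i" if "g \<in> generate G S" for g
    using that
  proof (induction g rule: generate.induct)
    case one then show ?case using tact_one[OF N1 e1] tact_one[OF N2 e2] by simp
  next
    case (incl s) then show ?case using dat by simp
  next
    case (inv s)
    have sG: "s \<in> carrier G" using inv S by blast
    show ?case
    proof (intro allI impI)
      fix i assume i: "i < k"
      define j where "j = tact G k e1 (inv s) i"
      have j: "j < k" using tact_props(1)[OF N1 e1 i inv_closed[OF sG]] by (simp add: j_def)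
      have "tact G k e1 s j = i" using tact_inv[OF N1 e1 i j sG] j_def by simp
      then have "tact G k e2 s j = i" using dat[OF inv(1) j] by simp
      then have "tact G k e2 (inv s) i = j" using tact_inv[OF N2 e2 i j sG] by simp
      then show "tact G k e1 (inv s) i = tact G k e2 (inv s) i" using j_def by simp
    qed
  next
    case (eng g h)
    have gG: "g \<in> carrier G" and hG: "h \<in> carrier G" using eng(1,2) generate_incl[OF S(1)] by auto
    show ?case
    proof (intro allI impI)
      fix i assume i: "i < k"
      have "tact G k e1 (g \<otimes> h) i = tact G k e1 h (tact G k e1 g i)" by (rule tact_mult[OF N1 e1 i gG hG])
      also have "\<dots> = tact G k e2 h (tact G k e2 g i)"
        using eng.IH tact_props(1)[OF N1 e1 i gG] i by simp
      also have "\<dots> = tact G k e2 (g \<otimes> h) i" by (rule tact_mult[OF N2 e2 i gG hG, symmetric])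
      finally show "tact G k e1 (g \<otimes> h) i = tact G k e2 (g \<otimes> h) i" .
    qed
  qed
  have "g \<in> N1 \<longleftrightarrow> g \<in> N2" if g: "g \<in> carrier G" for g
  proof -
    have "g \<in> generate G S" using g S(2) by simp
    then have "tact G k e1 g (inv_into {..<k} e1 N1) = tact G k e2 g (inv_into {..<k} e2 N2)"
      using key tact_base(1)[OF N1 e1] base by metis
    then show ?thesis using tact_mem[OF N1 e1 g] tact_mem[OF N2 e2 g] base by simp
  qed
  then show ?thesis using subgroup.subset[OF N1] subgroup.subset[OF N2] by blast
qed

lemma finite_bounded_index:
  assumes fg: "fin_generated G"
  shows "finite {N. subgroup N G \<and> finite (rcosets N) \<and> card (rcosets N) \<le> n}"
proof -
  obtain S where S: "finite S" "S \<subseteq> carrier G" "generate G S = carrier G"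
    using fg unfolding fin_generated_def by blast
  let ?X = "{N. subgroup N G \<and> finite (rcosets N) \<and> card (rcosets N) \<le> n}"
  define dat where "dat N e = (card (rcosets N), inv_into {..<card (rcosets N)} e N,
      \<lambda>s\<in>S. \<lambda>i\<in>{..<card (rcosets N)}. tact G (card (rcosets N)) e s i)" for N e
  define D where "D N = (SOME d. \<exists>e. bij_betw e {..<card (rcosets N)} (rcosets N) \<and> d = dat N e)" for N
  have exD: "\<exists>e. bij_betw e {..<card (rcosets N)} (rcosets N) \<and> D N = dat N e" if "N \<in> ?X" for N
  proof -
    have "\<exists>e. bij_betw e {..<card (rcosets N)} (rcosets N)"
      using ex_bij_betw_nat_finite[of "rcosets N"] that by (auto simp: atLeast0LessThan)
    then have "\<exists>d e. bij_betw e {..<card (rcosets N)} (rcosets N) \<and> d = dat N e" by blast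
    then show ?thesis unfolding D_def by (rule someI2_ex) blast
  qed
  let ?C = "{..n} \<times> {..n} \<times> (S \<rightarrow>\<^sub>E (\<Union>k\<in>{..n}. {..<k} \<rightarrow>\<^sub>E {..<k}))"
  have img: "D ` ?X \<subseteq> ?C"
  proof
    fix d assume "d \<in> D ` ?X"
    then obtain N where N: "N \<in> ?X" "d = D N" by blast
    obtain e where e: "bij_betw e {..<card (rcosets N)} (rcosets N)" "D N = dat N e" using exD[OF N(1)] by blast
    have sN: "subgroup N G" using N by simp
    have "inv_into {..<card (rcosets N)} e N < card (rcosets N)" using tact_base(1)[OF sN e(1)] .
    moreover have "(\<lambda>i\<in>{..<card (rcosets N)}. tact G (card (rcosets N)) e s i) \<in> (\<Union>k\<in>{..n}. {..<k} \<rightarrow>\<^sub>E {..<k})"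
      if "s \<in> S" for s
    proof (rule UN_I[of "card (rcosets N)"])
      show "card (rcosets N) \<in> {..n}" using N by simp
      show "(\<lambda>i\<in>{..<card (rcosets N)}. tact G (card (rcosets N)) e s i) \<in> {..<card (rcosets N)} \<rightarrow>\<^sub>E {..<card (rcosets N)}"
        using tact_props(1)[OF sN e(1) _ subsetD[OF S(2) that]] by auto
    qed
    ultimately show "d \<in> ?C" using N e unfolding dat_def by auto
  qed
  have fC: "finite ?C" using S(1) by (intro finite_SigmaI finite_PiE finite_UN_I) auto
  have inj: "inj_on D ?X"
  proof (rule inj_onI)
    fix N1 N2 assume N1: "N1 \<in> ?X" and N2: "N2 \<in> ?X" and eq: "D N1 = D N2"
    obtain e1 where e1: "bij_betw e1 {..<card (rcosets N1)} (rcosets N1)" "D N1 = dat N1 e1" using exD[OF N1] by blast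
    obtain e2 where e2: "bij_betw e2 {..<card (rcosets N2)} (rcosets N2)" "D N2 = dat N2 e2" using exD[OF N2] by blast
    have eqd: "dat N1 e1 = dat N2 e2" using eq e1 e2 by simp
    have k: "card (rcosets N1) = card (rcosets N2)" using eqd unfolding dat_def by simp
    define k where "k = card (rcosets N1)"
    have e1': "bij_betw e1 {..<k} (rcosets N1)" using e1 k_def by simp
    have e2': "bij_betw e2 {..<k} (rcosets N2)" using e2 k k_def by simp
    have base: "inv_into {..<k} e1 N1 = inv_into {..<k} e2 N2" using eqd k unfolding dat_def k_def by simp
    have fe: "(\<lambda>s\<in>S. \<lambda>i\<in>{..<k}. tact G k e1 s i) = (\<lambda>s\<in>S. \<lambda>i\<in>{..<k}. tact G k e2 s i)"
      using eqd k unfolding dat_def k_def by simp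
    have dd: "tact G k e1 s i = tact G k e2 s i" if "s \<in> S" "i < k" for s i
    proof -
      have "(\<lambda>s\<in>S. \<lambda>i\<in>{..<k}. tact G k e1 s i) s i = (\<lambda>s\<in>S. \<lambda>i\<in>{..<k}. tact G k e2 s i) s i"
        using fe by simp
      then show ?thesis using that by simp
    qed
    show "N1 = N2" using perm_determines[OF _ e1' _ e2' base S(2,3) dd] N1 N2 by simp
  qed
  show ?thesis using inj_on_finite[OF inj img fC] .
qed

end


context group begin

lemma coset_in_rcosets: "subgroup N G \<Longrightarrow> c \<in> rcosets N \<Longrightarrow> g \<in> carrier G \<Longrightarrow> c #> g \<in> rcosets N"
  by (auto elim!: rcosets_elim simp: coset_mult_assoc subgroup.subset intro!: rcosetsI')

lemma rcosets_carrier_self: "rcosets (carrier G) \<subseteq> {carrier G}"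
  by (auto elim!: rcosets_elim simp: coset_join2 subgroup_self)

lemma carrier_fin_index: "carrier G \<in> fin_index_normals G"
  unfolding fin_index_normals_def
  using rcosets_carrier_self finite_subset normal_inv_iff subgroup_self by (auto intro: finite_subset[OF rcosets_carrier_self])

lemma action_kernel:
  assumes N: "subgroup N G" and f: "finite (rcosets N)"
  defines "U \<equiv> {g\<in>carrier G. \<forall>c\<in>rcosets N. c #> g = c}"
  shows "U \<in> fin_index_normals G" "U \<subseteq> N"
proof -
  have csub: "\<And>c. c \<in> rcosets N \<Longrightarrow> c \<subseteq> carrier G" using rcosets_subset_carrier[OF N] .
  have sU: "subgroup U G"
  proof (rule subgroupI)
    show "U \<subseteq> carrier G" unfolding U_def by blast
    show "U \<noteq> {}" unfolding U_def using csub by (auto intro!: exI[of _ \<one>])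
  next
    fix a assume a: "a \<in> U"
    then have aG: "a \<in> carrier G" unfolding U_def by blast
    have "c #> inv a = c" if c: "c \<in> rcosets N" for c
    proof -
      have "c #> inv a = (c #> a) #> inv a" using a c unfolding U_def by simp
      also have "\<dots> = c" using coset_mult_assoc[OF csub[OF c] aG inv_closed[OF aG]] csub[OF c] aG by simp
      finally show ?thesis .
    qed
    then show "inv a \<in> U" unfolding U_def using aG by simp
  next
    fix a b assume a: "a \<in> U" and b: "b \<in> U"
    then have aG: "a \<in> carrier G" and bG: "b \<in> carrier G" unfolding U_def by auto
    have "c #> (a \<otimes> b) = c" if c: "c \<in> rcosets N" for c
      using coset_mult_assoc[OF csub[OF c] aG bG, symmetric] a b c unfolding U_def by simp
    then show "a \<otimes> b \<in> U" unfolding U_def using aG bG by simp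
  qed
  have nU: "U \<lhd> G"
    unfolding normal_inv_iff
  proof (intro conjI sU ballI)
    fix x h assume x: "x \<in> carrier G" and h: "h \<in> U"
    then have hG: "h \<in> carrier G" unfolding U_def by auto
    have "c #> (x \<otimes> h \<otimes> inv x) = c" if c: "c \<in> rcosets N" for c
    proof -
      have cx: "c #> x \<in> rcosets N" using coset_in_rcosets[OF N c x] .
      have "c #> (x \<otimes> h \<otimes> inv x) = ((c #> x) #> h) #> inv x"
        using csub[OF c] x hG by (simp add: coset_mult_assoc r_coset_subset_G)
      also have "\<dots> = (c #> x) #> inv x" using h cx unfolding U_def by simp
      also have "\<dots> = c" using csub[OF c] x by (simp add: coset_mult_assoc)
      finally show ?thesis .
    qed
    then show "x \<otimes> h \<otimes> inv x \<in> U" unfolding U_def using x hG by simp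
  qed
  have inj: "inj_on (\<lambda>d. \<lambda>c\<in>rcosets N. c <#> d) (rcosets U)"
  proof (rule inj_onI)
    fix d1 d2 assume d1: "d1 \<in> rcosets U" and d2: "d2 \<in> rcosets U"
      and eq: "(\<lambda>c\<in>rcosets N. c <#> d1) = (\<lambda>c\<in>rcosets N. c <#> d2)"
    obtain a where a: "a \<in> carrier G" "d1 = U #> a" using d1 by (rule rcosets_elim)
    obtain b where b: "b \<in> carrier G" "d2 = U #> b" using d2 by (rule rcosets_elim)
    have cU: "c <#> U = c" if c: "c \<in> rcosets N" for c
    proof
      show "c <#> U \<subseteq> c"
      proof
        fix y assume "y \<in> c <#> U"
        then obtain z u where z: "z \<in> c" "u \<in> U" "y = z \<otimes> u" unfolding set_mult_def by blast
        then have "y \<in> c #> u" unfolding r_coset_def by blast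
        then show "y \<in> c" using z(2) c unfolding U_def by simp
      qed
      show "c \<subseteq> c <#> U"
      proof
        fix y assume y: "y \<in> c"
        then have "y = y \<otimes> \<one>" using csub[OF c] by (metis r_one subsetD)
        then show "y \<in> c <#> U" using y subgroup.one_closed[OF sU] unfolding set_mult_def by blast
      qed
    qed
    have "c #> a = c #> b" if c: "c \<in> rcosets N" for c
    proof -
      have "c <#> d1 = c <#> d2" using eq c by (metis restrict_apply')
      then have "(c <#> U) #> a = (c <#> U) #> b" using a b csub[OF c] subgroup.subset[OF sU]
        by (simp add: setmult_rcos_assoc)
      then show ?thesis using cU[OF c] by simp
    qed
    then have "c #> (a \<otimes> inv b) = c" if c: "c \<in> rcosets N" for c
      using coset_mult_inv2[of c a b] that a b csub[OF c] by simp
    then have "a \<otimes> inv b \<in> U" unfolding U_def using a b by simp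
    then show "d1 = d2" using coset_eq_iff[OF sU a(1) b(1)] a b by simp
  qed
  have img: "(\<lambda>d. \<lambda>c\<in>rcosets N. c <#> d) ` (rcosets U) \<subseteq> (rcosets N \<rightarrow>\<^sub>E rcosets N)"
  proof
    fix y assume "y \<in> (\<lambda>d. \<lambda>c\<in>rcosets N. c <#> d) ` (rcosets U)"
    then obtain a where a: "a \<in> carrier G" "y = (\<lambda>c\<in>rcosets N. c <#> (U #> a))" by (auto elim!: rcosets_elim)
    have "c <#> (U #> a) \<in> rcosets N" if c: "c \<in> rcosets N" for c
    proof -
      obtain b where b: "b \<in> carrier G" "c = N #> b" using c by (rule rcosets_elim)
      have "c <#> (U #> a) = (c <#> U) #> a" using csub[OF c] subgroup.subset[OF sU] a by (simp add: setmult_rcos_assoc)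
      moreover have "c <#> U = c"
      proof
        show "c <#> U \<subseteq> c"
        proof
          fix y assume "y \<in> c <#> U"
          then obtain z u where z: "z \<in> c" "u \<in> U" "y = z \<otimes> u" unfolding set_mult_def by blast
          then have "y \<in> c #> u" unfolding r_coset_def by blast
          then show "y \<in> c" using z(2) c unfolding U_def by simp
        qed
        show "c \<subseteq> c <#> U"
        proof
          fix y assume y: "y \<in> c"
          then have "y = y \<otimes> \<one>" using csub[OF c] by (metis r_one subsetD)
          then show "y \<in> c <#> U" using y subgroup.one_closed[OF sU] unfolding set_mult_def by blast
        qed
      qed
      ultimately show ?thesis using coset_in_rcosets[OF N c a(1)] by simp
    qed
    then show "y \<in> (rcosets N \<rightarrow>\<^sub>E rcosets N)" using a by auto
  qed
  have "finite (rcosets U)" using inj_on_finite[OF inj img] f by (simp add: finite_PiE)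
  then show "U \<in> fin_index_normals G" using nU unfolding fin_index_normals_def by simp
  show "U \<subseteq> N"
  proof
    fix g assume g: "g \<in> U"
    have "N \<in> rcosets N" using rcosetsI'[OF N one_closed] subgroup.subset[OF N] by simp
    then have "N #> g = N" using g unfolding U_def by simp
    then show "g \<in> N" using coset_join1[of N g] g N unfolding U_def by simp
  qed
qed

end


context group begin

lemma proj_hom:
  assumes A: "A \<lhd> G" and B: "B \<lhd> G" and AB: "A \<subseteq> B"
  shows "(\<lambda>c. B <#> c) \<in> hom (G Mod A) (G Mod B)"
    "(\<lambda>c. B <#> c) ` carrier (G Mod A) = carrier (G Mod B)"
proof -
  have sA: "subgroup A G" and sB: "subgroup B G" using A B normal_imp_subgroup by auto
  have ab: "B <#> (A #> a) = B #> a" if "a \<in> carrier G" for a using setmult_coset_absorb[OF sA sB AB that] .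
  show "(\<lambda>c. B <#> c) \<in> hom (G Mod A) (G Mod B)"
  proof (rule homI)
    fix c assume "c \<in> carrier (G Mod A)"
    then obtain a where a: "a \<in> carrier G" "c = A #> a" by (auto simp: FactGroup_def elim!: rcosets_elim)
    show "B <#> c \<in> carrier (G Mod B)" using a ab rcosetsI'[OF sB a(1)] by (simp add: FactGroup_def)
  next
    fix c d assume "c \<in> carrier (G Mod A)" "d \<in> carrier (G Mod A)"
    then obtain a b where a: "a \<in> carrier G" "c = A #> a" and b: "b \<in> carrier G" "d = A #> b"
      by (auto simp: FactGroup_def elim!: rcosets_elim)
    have "c \<otimes>\<^bsub>G Mod A\<^esub> d = A #> (a \<otimes> b)" using a b normal.rcos_sum[OF A] by simp
    then show "B <#> (c \<otimes>\<^bsub>G Mod A\<^esub> d) = (B <#> c) \<otimes>\<^bsub>G Mod B\<^esub> (B <#> d)"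
      using a b ab normal.rcos_sum[OF B] by simp
  qed
  show "(\<lambda>c. B <#> c) ` carrier (G Mod A) = carrier (G Mod B)"
  proof
    show "(\<lambda>c. B <#> c) ` carrier (G Mod A) \<subseteq> carrier (G Mod B)"
      using ab rcosetsI'[OF sB] by (auto simp: FactGroup_def elim!: rcosets_elim)
    show "carrier (G Mod B) \<subseteq> (\<lambda>c. B <#> c) ` carrier (G Mod A)"
    proof
      fix c assume "c \<in> carrier (G Mod B)"
      then obtain a where a: "a \<in> carrier G" "c = B #> a" by (auto simp: FactGroup_def elim!: rcosets_elim)
      then have "c = B <#> (A #> a)" using ab by simp
      moreover have "A #> a \<in> carrier (G Mod A)" using rcosetsI'[OF sA a(1)] by (simp add: FactGroup_def)
      ultimately show "c \<in> (\<lambda>c. B <#> c) ` carrier (G Mod A)" by blast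
    qed
  qed
qed

lemma hom_eq_on_generate:
  assumes T: "group T" and h1: "\<phi>1 \<in> hom G T" and h2: "\<phi>2 \<in> hom G T"
    and S: "S \<subseteq> carrier G" and eq: "\<And>s. s \<in> S \<Longrightarrow> \<phi>1 s = \<phi>2 s"
  shows "g \<in> generate G S \<Longrightarrow> \<phi>1 g = \<phi>2 g"
proof (induction g rule: generate.induct)
  interpret g1: group_hom G T \<phi>1 using T h1 by (simp add: group_hom_def group_hom_axioms_def is_group)
  interpret g2: group_hom G T \<phi>2 using T h2 by (simp add: group_hom_def group_hom_axioms_def is_group)
  case one then show ?case by simp
next
  case (incl h) then show ?case using eq by simp
next
  interpret g1: group_hom G T \<phi>1 using T h1 by (simp add: group_hom_def group_hom_axioms_def is_group)
  interpret g2: group_hom G T \<phi>2 using T h2 by (simp add: group_hom_def group_hom_axioms_def is_group)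
  case (inv h) then show ?case using eq S by (simp add: subsetD)
next
  interpret g1: group_hom G T \<phi>1 using T h1 by (simp add: group_hom_def group_hom_axioms_def is_group)
  interpret g2: group_hom G T \<phi>2 using T h2 by (simp add: group_hom_def group_hom_axioms_def is_group)
  case (eng a b)
  have "a \<in> carrier G" "b \<in> carrier G" using eng(1,2) generate_incl[OF S] by auto
  then show ?case using eng by simp
qed

end


locale pc = group G for G :: "('a,'b) monoid_scheme" (structure) +
  fixes H :: "'a set"
  assumes fg: "fin_generated G" and sub: "subgroup H G" and fidx: "finite (rcosets\<^bsub>G\<^esub> H)"
    and hyp: "\<forall>N\<in>fin_index_normals (G\<lparr>carrier := H\<rparr>). \<exists>M\<in>fin_index_normals G. (G\<lparr>carrier := H\<rparr> Mod N) \<cong> (G Mod M)"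
begin

lemma Hg: "group (G\<lparr>carrier := H\<rparr>)" using subgroup.subgroup_is_group[OF sub is_group] .

lemma HG: "H \<subseteq> carrier G" using subgroup.subset[OF sub] .

lemma Hg_subgroup_iff: "subgroup N (G\<lparr>carrier := H\<rparr>) \<longleftrightarrow> subgroup N G \<and> N \<subseteq> H"
  using incl_subgroup[OF sub, of N] subgroup_incl[OF _ sub, of N] subgroup.subset[of N "G\<lparr>carrier := H\<rparr>"]
  by auto

lemma Hg_normal_iff: "N \<lhd> G\<lparr>carrier := H\<rparr> \<longleftrightarrow> subgroup N G \<and> N \<subseteq> H \<and> (\<forall>x\<in>H. \<forall>h\<in>N. x \<otimes> h \<otimes> inv x \<in> N)"
proof -
  have "N \<lhd> G\<lparr>carrier := H\<rparr> \<longleftrightarrow> subgroup N (G\<lparr>carrier := H\<rparr>) \<and> (\<forall>x\<in>H. \<forall>h\<in>N. x \<otimes> h \<otimes> inv\<^bsub>G\<lparr>carrier := H\<rparr>\<^esub> x \<in> N)"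
    using group.normal_inv_iff[OF Hg, of N] by simp
  also have "\<dots> \<longleftrightarrow> subgroup N G \<and> N \<subseteq> H \<and> (\<forall>x\<in>H. \<forall>h\<in>N. x \<otimes> h \<otimes> inv x \<in> N)"
    using Hg_subgroup_iff m_inv_consistent[OF sub] by auto
  finally show ?thesis .
qed

definition M :: "nat \<Rightarrow> 'a set" where
  "M n = \<Inter>(insert (carrier G) {U \<in> fin_index_normals G. card (rcosets U) \<le> n})"

lemma M_family_finite: "finite (insert (carrier G) {U \<in> fin_index_normals G. card (rcosets U) \<le> n})"
proof -
  have "{U \<in> fin_index_normals G. card (rcosets U) \<le> n} \<subseteq> {N. subgroup N G \<and> finite (rcosets N) \<and> card (rcosets N) \<le> n}"
    unfolding fin_index_normals_def using normal_imp_subgroup by auto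
  then show ?thesis using finite_bounded_index[OF fg, of n] finite_subset by auto
qed

lemma M_props: "M n \<in> fin_index_normals G" "M n \<subseteq> carrier G" "subgroup (M n) G" "M n \<lhd> G"
proof -
  let ?F = "insert (carrier G) {U \<in> fin_index_normals G. card (rcosets U) \<le> n}"
  have F: "U \<lhd> G \<and> finite (rcosets U)" if U: "U \<in> ?F" for U
  proof -
    have "U \<in> fin_index_normals G" using U carrier_fin_index by blast
    then show ?thesis unfolding fin_index_normals_def by blast
  qed
  have sF: "subgroup U G" if U: "U \<in> ?F" for U
    using F[OF U] normal_imp_subgroup by blast
  have s: "subgroup (M n) G" unfolding M_def
    by (rule subgroups_Inter[OF sF]) blast+
  have nm: "M n \<lhd> G" unfolding normal_inv_iff
  proof (intro conjI s ballI)
    fix x h assume x: "x \<in> carrier G" and h: "h \<in> M n"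
    have "x \<otimes> h \<otimes> inv x \<in> U" if U: "U \<in> ?F" for U
    proof -
      have "h \<in> U" using h U unfolding M_def by blast
      then show ?thesis using normal.inv_op_closed2[OF conjunct1[OF F[OF U]] x] by blast
    qed
    then show "x \<otimes> h \<otimes> inv x \<in> M n" unfolding M_def by blast
  qed
  have "finite (rcosets (M n))" unfolding M_def
    using finite_rcosets_Inter[OF M_family_finite _ sF] F by blast
  then show "M n \<in> fin_index_normals G" using nm unfolding fin_index_normals_def by simp
  show "M n \<subseteq> carrier G" unfolding M_def by blast
  show "subgroup (M n) G" by (rule s)
  show "M n \<lhd> G" by (rule nm)
qed

lemma M_sub: "U \<in> fin_index_normals G \<Longrightarrow> card (rcosets U) \<le> n \<Longrightarrow> M n \<subseteq> U"
  unfolding M_def by blast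

lemma M_mono: "n \<le> m \<Longrightarrow> M m \<subseteq> M n"
  unfolding M_def by auto

definition L :: "nat \<Rightarrow> 'a set" where "L n = M n \<inter> H"

lemma L_props: "L n \<in> fin_index_normals (G\<lparr>carrier := H\<rparr>)" "L n \<subseteq> H" "subgroup (L n) G"
  "L n \<lhd> G\<lparr>carrier := H\<rparr>" "L n \<subseteq> M n"
proof -
  have s: "subgroup (L n) G" unfolding L_def using subgroups_Inter_pair[OF M_props(3) sub] .
  have "L n \<lhd> G\<lparr>carrier := H\<rparr>" unfolding Hg_normal_iff
  proof (intro conjI s ballI)
    show "L n \<subseteq> H" unfolding L_def by blast
    fix x h assume x: "x \<in> H" and h: "h \<in> L n"
    have "x \<otimes> h \<otimes> inv x \<in> M n" using normal.inv_op_closed2[OF M_props(4)] x h HG unfolding L_def by auto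
    moreover have "x \<otimes> h \<otimes> inv x \<in> H" using x h sub unfolding L_def
      by (auto intro!: subgroup.m_closed subgroup.m_inv_closed)
    ultimately show "x \<otimes> h \<otimes> inv x \<in> L n" unfolding L_def by blast
  qed
  moreover have "finite (rcosets\<^bsub>G\<lparr>carrier := H\<rparr>\<^esub> (L n))"
    unfolding L_def using index_inter[OF M_props(3) sub] M_props(1) unfolding fin_index_normals_def by blast
  ultimately show "L n \<in> fin_index_normals (G\<lparr>carrier := H\<rparr>)" unfolding fin_index_normals_def by simp
  show "L n \<subseteq> H" "subgroup (L n) G" "L n \<lhd> G\<lparr>carrier := H\<rparr>" "L n \<subseteq> M n"
    using s \<open>L n \<lhd> G\<lparr>carrier := H\<rparr>\<close> unfolding L_def by auto
qed

lemma L_mono: "n \<le> m \<Longrightarrow> L m \<subseteq> L n"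
  unfolding L_def using M_mono by blast

lemma L_cofinal:
  assumes N: "N \<in> fin_index_normals (G\<lparr>carrier := H\<rparr>)"
  shows "\<exists>n. L n \<subseteq> N"
proof -
  have nN: "N \<lhd> G\<lparr>carrier := H\<rparr>" and fN: "finite (rcosets\<^bsub>G\<lparr>carrier := H\<rparr>\<^esub> N)"
    using N unfolding fin_index_normals_def by auto
  have sN: "subgroup N G" and NH: "N \<subseteq> H" using nN unfolding Hg_normal_iff by auto
  have "finite (rcosets N)" using index_tower[OF sN sub NH fN fidx] by simp
  then obtain U where U: "U \<in> fin_index_normals G" "U \<subseteq> N" using action_kernel[OF sN] by blast
  have "L (card (rcosets U)) \<subseteq> N" using M_sub[OF U(1) order_refl] U(2) L_props(5) by blast
  then show ?thesis by blast
qed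

end


context pc begin

abbreviation Hg where "Hg \<equiv> G\<lparr>carrier := H\<rparr>"

lemma Q_group: "group (Hg Mod L n)"
  using normal.factorgroup_is_group[OF L_props(4)] .

lemma Q_carrier: "carrier (Hg Mod L n) = rcosets\<^bsub>Hg\<^esub> (L n)"
  by (simp add: FactGroup_def)

lemma Q_carrier': "carrier (Hg Mod L n) = (\<Union>a\<in>H. {L n #> a})"
  by (simp add: FactGroup_def rcosets_upd)

lemma Q_finite: "finite (carrier (Hg Mod L n))"
  using L_props(1)[of n] unfolding Q_carrier fin_index_normals_def by simp

definition E :: "nat \<Rightarrow> ('a \<Rightarrow> 'a set) set" where
  "E n = {\<psi>. \<psi> \<in> hom G (Hg Mod L n) \<and> \<psi> ` carrier G = carrier (Hg Mod L n) \<and> \<psi> \<in> extensional (carrier G)}"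

definition pr :: "nat \<Rightarrow> ('a \<Rightarrow> 'a set) \<Rightarrow> ('a \<Rightarrow> 'a set)" where
  "pr n \<psi> = (\<lambda>g\<in>carrier G. L n <#> \<psi> g)"

lemma E_fin: "finite (E n)"
proof -
  obtain S where S: "finite S" "S \<subseteq> carrier G" "generate G S = carrier G"
    using fg unfolding fin_generated_def by blast
  have inj: "inj_on (\<lambda>\<psi>. restrict \<psi> S) (E n)"
  proof (rule inj_onI)
    fix \<psi>1 \<psi>2 assume p1: "\<psi>1 \<in> E n" and p2: "\<psi>2 \<in> E n" and eq: "restrict \<psi>1 S = restrict \<psi>2 S"
    have es: "\<psi>1 s = \<psi>2 s" if "s \<in> S" for s using eq that by (metis restrict_apply')
    have "\<psi>1 g = \<psi>2 g" if "g \<in> carrier G" for g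
    proof (rule hom_eq_on_generate[OF Q_group])
      show "\<psi>1 \<in> hom G (Hg Mod L n)" using p1 unfolding E_def by simp
      show "\<psi>2 \<in> hom G (Hg Mod L n)" using p2 unfolding E_def by simp
      show "S \<subseteq> carrier G" by (rule S(2))
      show "\<And>s. s \<in> S \<Longrightarrow> \<psi>1 s = \<psi>2 s" by (rule es)
      show "g \<in> generate G S" using that S(3) by simp
    qed
    then show "\<psi>1 = \<psi>2" using p1 p2 unfolding E_def by (auto intro: extensionalityI)
  qed
  have img: "(\<lambda>\<psi>. restrict \<psi> S) ` (E n) \<subseteq> (S \<rightarrow>\<^sub>E carrier (Hg Mod L n))"
    using S(2) unfolding E_def hom_def by (auto simp: Pi_def)
  show ?thesis using inj_on_finite[OF inj img] S(1) Q_finite by (simp add: finite_PiE)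
qed

lemma E_ne: "E n \<noteq> {}"
proof -
  obtain M' where M': "M' \<in> fin_index_normals G" "(Hg Mod L n) \<cong> (G Mod M')"
    using hyp L_props(1)[of n] by blast
  have "(G Mod M') \<cong> (Hg Mod L n)" using group.iso_sym[OF Q_group M'(2)] .
  then obtain \<phi> where \<phi>: "\<phi> \<in> iso (G Mod M') (Hg Mod L n)" unfolding is_iso_def by blast
  have nM: "M' \<lhd> G" using M'(1) unfolding fin_index_normals_def by simp
  define \<psi> where "\<psi> = (\<lambda>g\<in>carrier G. \<phi> (M' #> g))"
  have "\<phi> \<circ> (\<lambda>g. M' #> g) \<in> hom G (Hg Mod L n)"
    using Group.hom_compose[OF normal.r_coset_hom_Mod[OF nM]] \<phi> unfolding iso_def by blast
  then have h: "\<psi> \<in> hom G (Hg Mod L n)" by (rule hom_restrict) (simp add: \<psi>_def)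
  have "\<psi> ` carrier G = \<phi> ` ((\<lambda>g. M' #> g) ` carrier G)" unfolding \<psi>_def by auto
  also have "\<dots> = \<phi> ` carrier (G Mod M')" by (simp add: carrier_FactGroup)
  also have "\<dots> = carrier (Hg Mod L n)" using \<phi> unfolding iso_def bij_betw_def by simp
  finally have "\<psi> \<in> E n" using h unfolding E_def \<psi>_def by simp
  then show ?thesis by blast
qed

lemma pr_maps: "\<psi> \<in> E (Suc n) \<Longrightarrow> pr n \<psi> \<in> E n"
proof -
  assume p: "\<psi> \<in> E (Suc n)"
  have ph: "(\<lambda>c. L n <#> c) \<in> hom (Hg Mod L (Suc n)) (Hg Mod L n)"
    and pi: "(\<lambda>c. L n <#> c) ` carrier (Hg Mod L (Suc n)) = carrier (Hg Mod L n)"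
    using group.proj_hom[OF Hg L_props(4) L_props(4) L_mono[of n "Suc n"]] by auto
  have "(\<lambda>c. L n <#> c) \<circ> \<psi> \<in> hom G (Hg Mod L n)"
    using Group.hom_compose[OF _ ph] p unfolding E_def by blast
  then have h: "pr n \<psi> \<in> hom G (Hg Mod L n)" by (rule hom_restrict) (simp add: pr_def)
  have "pr n \<psi> ` carrier G = (\<lambda>c. L n <#> c) ` (\<psi> ` carrier G)" unfolding pr_def by auto
  also have "\<dots> = carrier (Hg Mod L n)" using p pi unfolding E_def by simp
  finally show "pr n \<psi> \<in> E n" using h unfolding E_def pr_def by simp
qed

definition psi :: "nat \<Rightarrow> 'a \<Rightarrow> 'a set" where
  "psi = (SOME a. \<forall>n. a n \<in> E n \<and> pr n (a (Suc n)) = a n)"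

lemma psi: "psi n \<in> E n" "pr n (psi (Suc n)) = psi n"
proof -
  have "\<exists>a. \<forall>n. a n \<in> E n \<and> pr n (a (Suc n)) = a n"
    by (rule koenig[OF E_fin E_ne pr_maps])
  then have "\<forall>n. psi n \<in> E n \<and> pr n (psi (Suc n)) = psi n" unfolding psi_def by (rule someI_ex)
  then show "psi n \<in> E n" "pr n (psi (Suc n)) = psi n" by auto
qed

lemma psi_hom: "psi n \<in> hom G (Hg Mod L n)" using psi(1) unfolding E_def by simp
lemma psi_surj: "psi n ` carrier G = carrier (Hg Mod L n)" using psi(1) unfolding E_def by simp

lemma psi_val: "g \<in> carrier G \<Longrightarrow> \<exists>h\<in>H. psi n g = L n #> h"
  using hom_in_carrier[OF psi_hom] Q_carrier' by blast

lemma psi_step: "g \<in> carrier G \<Longrightarrow> psi n g = L n <#> psi (Suc n) g"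
  using psi(2)[of n] unfolding pr_def by (metis restrict_apply')

lemma psi_down1:
  assumes g: "g \<in> carrier G" and h: "h \<in> H" and eq: "psi (Suc n) g = L (Suc n) #> h"
  shows "psi n g = L n #> h"
  using psi_step[OF g, of n] eq setmult_coset_absorb[OF L_props(3) L_props(3) L_mono[of n "Suc n"]] h HG by auto

lemma psi_down:
  assumes g: "g \<in> carrier G" and h: "h \<in> H"
  shows "psi (n + d) g = L (n + d) #> h \<Longrightarrow> psi n g = L n #> h"
proof (induction d)
  case 0 then show ?case by simp
next
  case (Suc d) then show ?case using psi_down1[OF g h, of "n + d"] by simp
qed

lemma psi_down':
  assumes "n \<le> m" "g \<in> carrier G" "h \<in> H" "psi m g = L m #> h"
  shows "psi n g = L n #> h"
  using psi_down[OF assms(2,3), of n "m - n"] assms(1,4) by simp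

definition K :: "nat \<Rightarrow> 'a set" where "K n = kernel G (Hg Mod L n) (psi n)"

lemma K_props: "K n \<in> fin_index_normals G" "card (rcosets (K n)) = card (rcosets\<^bsub>Hg\<^esub> (L n))"
  "subgroup (K n) G" "K n \<lhd> G" "K n \<subseteq> carrier G"
proof -
  have "K n \<lhd> G" "finite (rcosets (K n))" "card (rcosets (K n)) = card (carrier (Hg Mod L n))"
    using kernel_fin_index[OF Q_group psi_hom Q_finite] psi_surj unfolding K_def by auto
  then show "K n \<in> fin_index_normals G" "card (rcosets (K n)) = card (rcosets\<^bsub>Hg\<^esub> (L n))"
    "subgroup (K n) G" "K n \<lhd> G" "K n \<subseteq> carrier G"
    unfolding fin_index_normals_def Q_carrier by (auto dest: normal_imp_subgroup subgroup.subset)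
qed

lemma K_mem: "g \<in> K n \<longleftrightarrow> g \<in> carrier G \<and> psi n g = L n"
  unfolding K_def kernel_def by simp

lemma K_mono: "n \<le> m \<Longrightarrow> K m \<subseteq> K n"
proof
  fix g assume nm: "n \<le> m" and g: "g \<in> K m"
  have gG: "g \<in> carrier G" and ps: "psi m g = L m" using g K_mem by auto
  have c1: "\<And>k. L k #> \<one> = L k" using coset_mult_one[OF subgroup.subset[OF L_props(3)]] by blast
  have "psi m g = L m #> \<one>" using ps c1 by simp
  then have "psi n g = L n #> \<one>" using psi_down'[OF nm gG subgroup.one_closed[OF sub]] by simp
  then have "psi n g = L n" using c1 by simp
  then show "g \<in> K n" using K_mem gG by simp
qed

lemma psi_const:
  assumes a: "a \<in> carrier G" and g: "g \<in> K n #> a"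
  shows "psi n g = psi n a"
proof -
  interpret gh: group_hom G "Hg Mod L n" "psi n"
    using Q_group psi_hom by (simp add: group_hom_def group_hom_axioms_def is_group)
  obtain k where k: "k \<in> K n" "g = k \<otimes> a" using g unfolding r_coset_def by blast
  have kG: "k \<in> carrier G" using k K_props(5) by blast
  have "psi n g = psi n k \<otimes>\<^bsub>Hg Mod L n\<^esub> psi n a" using k kG a by simp
  also have "\<dots> = L n <#> psi n a" using k K_mem by simp
  also have "\<dots> = psi n a"
    using normal.rcosets_mult_eq[OF L_props(4), of "psi n a"] hom_in_carrier[OF psi_hom a] Q_carrier by simp
  finally show ?thesis .
qed

end


context group begin

lemma count_sub:
  assumes A: "subgroup A G" and B: "subgroup B G" and AB: "A \<subseteq> B" and f: "finite (rcosets A)"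
  shows "card {c\<in>rcosets A. c \<subseteq> B} * card (rcosets B) \<le> card (rcosets A)"
proof -
  define rep where "rep c = (SOME x. x \<in> c)" for c :: "'a set"
  let ?X = "{c\<in>rcosets A. c \<subseteq> B}"
  let ?F = "\<lambda>(c, d). c #> rep d"
  have fB: "finite (rcosets B)" using index_mono[OF A B AB f] by simp
  have repB: "rep d \<in> d" "rep d \<in> carrier G" "d = B #> rep d" if d: "d \<in> rcosets B" for d
  proof -
    show r: "rep d \<in> d" using rep_in[OF B d] unfolding rep_def .
    obtain b where b: "b \<in> carrier G" "d = B #> b" using d by (rule rcosets_elim)
    show "rep d \<in> carrier G" using r rcosets_subset_carrier[OF B d] by blast
    show "d = B #> rep d" using repr_independence[OF _ b(1) B, of "rep d"] r b by simp
  qed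
  have inj: "inj_on ?F (?X \<times> rcosets B)"
  proof (rule inj_onI, clarify)
    fix c d c' d' assume c: "c \<in> rcosets A" "c \<subseteq> B" and d: "d \<in> rcosets B"
      and c': "c' \<in> rcosets A" "c' \<subseteq> B" and d': "d' \<in> rcosets B"
      and eq: "c #> rep d = c' #> rep d'"
    define r where "r = rep d"
    define r' where "r' = rep d'"
    have rG: "r \<in> carrier G" and r'G: "r' \<in> carrier G" using repB d d' r_def r'_def by auto
    obtain a where a: "a \<in> carrier G" "c = A #> a" using c(1) by (rule rcosets_elim)
    have ac: "a \<in> c" using rcos_self[OF a(1) A] a by simp
    then have aB: "a \<in> B" using c(2) by blast
    have "a \<otimes> r \<in> c #> r" using ac unfolding r_coset_def by blast
    then have "a \<otimes> r \<in> c' #> r'" using eq r_def r'_def by simp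
    then obtain y where y: "y \<in> c'" "a \<otimes> r = y \<otimes> r'" unfolding r_coset_def by blast
    have yB: "y \<in> B" using y c'(2) by blast
    have yG: "y \<in> carrier G" using yB subgroup.subset[OF B] by blast
    have "r \<otimes> inv r' = inv a \<otimes> y"
    proof -
      have "r = inv a \<otimes> (y \<otimes> r')" using y(2) a(1) rG r'G yG
        by (metis inv_solve_left m_closed)
      then show ?thesis using a(1) yG r'G by (simp add: m_assoc)
    qed
    moreover have "inv a \<otimes> y \<in> B" using aB yB B by (simp add: subgroup.m_closed subgroup.m_inv_closed)
    ultimately have "B #> r = B #> r'" using coset_eq_iff[OF B rG r'G] by simp
    then have dd: "d = d'" using repB(3)[OF d] repB(3)[OF d'] r_def r'_def by simp
    then have "c #> r = c' #> r" using eq r_def by simp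
    then have "(c #> r) #> inv r = (c' #> r) #> inv r" by simp
    moreover have "c \<subseteq> carrier G" "c' \<subseteq> carrier G"
      using rcosets_subset_carrier[OF A] c(1) c'(1) by auto
    ultimately have "c = c'" using rG by (simp add: coset_mult_assoc)
    then show "c = c' \<and> d = d'" using dd by simp
  qed
  have img: "?F ` (?X \<times> rcosets B) \<subseteq> rcosets A"
  proof clarify
    fix c d assume c: "c \<in> rcosets A" "c \<subseteq> B" and d: "d \<in> rcosets B"
    show "c #> rep d \<in> rcosets A" using coset_in_rcosets[OF A c(1) repB(2)[OF d]] .
  qed
  have "card (?X \<times> rcosets B) \<le> card (rcosets A)" using card_inj_on_le[OF inj img f] .
  then show ?thesis by (simp add: card_cartesian_product)
qed

end

context pc begin

lemma M_sub_K: "M n \<subseteq> K n"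
proof
  fix g assume g: "g \<in> M n"
  have gG: "g \<in> carrier G" using g M_props(2) by blast
  obtain h where h: "h \<in> H" "psi n g = L n #> h" using psi_val[OF gG] by blast
  have hG: "h \<in> carrier G" using h(1) HG by blast
  have hU: "h \<in> U" if U: "U \<in> fin_index_normals G" "card (rcosets U) \<le> n" for U
  proof -
    define V where "V = U \<inter> H"
    have nU: "U \<lhd> G" and fU: "finite (rcosets U)" using U(1) unfolding fin_index_normals_def by auto
    have sU: "subgroup U G" using nU normal_imp_subgroup by blast
    have sV: "subgroup V G" unfolding V_def using subgroups_Inter_pair[OF sU sub] .
    have nV: "V \<lhd> Hg" unfolding Hg_normal_iff
    proof (intro conjI sV ballI)
      show "V \<subseteq> H" unfolding V_def by blast
      fix x k assume x: "x \<in> H" and k: "k \<in> V"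
      have xG: "x \<in> carrier G" using x HG by blast
      have "x \<otimes> k \<otimes> inv x \<in> U" using normal.inv_op_closed2[OF nU xG] k unfolding V_def by blast
      moreover have "x \<otimes> k \<otimes> inv x \<in> H" using x k sub unfolding V_def
        by (simp add: subgroup.m_closed subgroup.m_inv_closed)
      ultimately show "x \<otimes> k \<otimes> inv x \<in> V" unfolding V_def by blast
    qed
    have LV: "L n \<subseteq> V" using M_sub[OF U] L_props(5)[of n] L_props(2)[of n] unfolding V_def by blast
    have ph: "(\<lambda>c. V <#> c) \<in> hom (Hg Mod L n) (Hg Mod V)"
      using group.proj_hom(1)[OF Hg L_props(4) nV LV] by simp
    define \<phi> where "\<phi> = (\<lambda>c. V <#> c) \<circ> psi n"
    have phh: "\<phi> \<in> hom G (Hg Mod V)" unfolding \<phi>_def using Group.hom_compose[OF psi_hom ph] .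
    have gV: "group (Hg Mod V)" using normal.factorgroup_is_group[OF nV] .
    have fV: "finite (carrier (Hg Mod V))" "card (carrier (Hg Mod V)) \<le> n"
      using index_inter[OF sU sub fU] U(2) unfolding V_def by (auto simp: FactGroup_def)
    have "kernel G (Hg Mod V) \<phi> \<in> fin_index_normals G" 
      "card (rcosets (kernel G (Hg Mod V) \<phi>)) \<le> n"
      using kernel_fin_index[OF gV phh fV(1)] fV(2) unfolding fin_index_normals_def by auto
    then have "M n \<subseteq> kernel G (Hg Mod V) \<phi>" by (rule M_sub)
    then have "\<phi> g = V" using g unfolding kernel_def by auto
    moreover have "\<phi> g = V #> h"
      unfolding \<phi>_def using h(2) setmult_coset_absorb[OF L_props(3) sV LV hG] by simp
    ultimately have "V #> h = V" by simp
    then have "h \<in> V" using coset_join1[OF _ hG sV] by simp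
    then show "h \<in> U" unfolding V_def by blast
  qed
  have "h \<in> M n" unfolding M_def using hU hG by blast
  then have "h \<in> L n" using h(1) unfolding L_def by blast
  then have "psi n g = L n" using h(2) coset_join2[OF hG L_props(3)] by simp
  then show "g \<in> K n" using K_mem gG by simp
qed

lemma card_M_bound: "card (rcosets (M n)) \<le> card (rcosets H) * card (rcosets\<^bsub>Hg\<^esub> (L n))"
  "finite (rcosets (M n))"
proof -
  have fHL: "finite (rcosets\<^bsub>Hg\<^esub> (L n))" using L_props(1)[of n] unfolding fin_index_normals_def by simp
  have t: "finite (rcosets (L n))" "card (rcosets (L n)) \<le> card (rcosets\<^bsub>Hg\<^esub> (L n)) * card (rcosets H)"
    using index_tower[OF L_props(3) sub L_props(2) fHL fidx] by auto
  have "card (rcosets (M n)) \<le> card (rcosets (L n))"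
    using index_mono[OF L_props(3) M_props(3) L_props(5) t(1)] by simp
  then show "card (rcosets (M n)) \<le> card (rcosets H) * card (rcosets\<^bsub>Hg\<^esub> (L n))"
    using t(2) by (simp add: mult.commute)
  show "finite (rcosets (M n))" using M_props(1) unfolding fin_index_normals_def by simp
qed

lemma kcount: "card {c \<in> rcosets (M n). c \<subseteq> K n} \<le> card (rcosets H)"
proof -
  let ?q = "card (rcosets\<^bsub>Hg\<^esub> (L n))"
  have fHL: "finite (rcosets\<^bsub>Hg\<^esub> (L n))" using L_props(1)[of n] unfolding fin_index_normals_def by simp
  have "L n #> \<one> \<in> rcosets\<^bsub>Hg\<^esub> (L n)" using subgroup.one_closed[OF sub] by (auto simp: rcosets_upd)
  then have q: "?q > 0" using fHL card_gt_0_iff by blast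
  have "card {c \<in> rcosets (M n). c \<subseteq> K n} * ?q \<le> card (rcosets (M n))"
    using count_sub[OF M_props(3) K_props(3) M_sub_K card_M_bound(2)] K_props(2) by simp
  also have "\<dots> \<le> card (rcosets H) * ?q" using card_M_bound(1) .
  finally show ?thesis using q by simp
qed

end


lemma PC_val: "x \<in> profinite_carrier G \<Longrightarrow> N \<in> fin_index_normals G \<Longrightarrow> x N \<in> rcosets\<^bsub>G\<^esub> N"
  unfolding profinite_carrier_def by auto

lemma PC_compat: "x \<in> profinite_carrier G \<Longrightarrow> N1 \<in> fin_index_normals G \<Longrightarrow> N2 \<in> fin_index_normals G
  \<Longrightarrow> N1 \<subseteq> N2 \<Longrightarrow> x N1 \<subseteq> x N2"
  unfolding profinite_carrier_def by auto

lemma PC_ext: "x \<in> profinite_carrier G \<Longrightarrow> x \<in> extensional (fin_index_normals G)"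
  unfolding profinite_carrier_def by (auto simp: PiE_def)

context group begin

lemma NG_props: "N \<in> fin_index_normals G \<Longrightarrow> N \<lhd> G \<and> subgroup N G \<and> finite (rcosets N)"
  unfolding fin_index_normals_def using normal_imp_subgroup by auto

lemma PC_rep:
  assumes x: "x \<in> profinite_carrier G" and N: "N \<in> fin_index_normals G" and a: "a \<in> x N"
  shows "x N = N #> a" "a \<in> carrier G"
proof -
  obtain b where b: "b \<in> carrier G" "x N = N #> b" using PC_val[OF x N] by (rule rcosets_elim)
  have sN: "subgroup N G" using NG_props[OF N] by simp
  show "x N = N #> a" using repr_independence[OF _ b(1) sN, of a] a b by simp
  show "a \<in> carrier G" using a b r_coset_subset_G[OF subgroup.subset[OF sN] b(1)] by blast
qed

lemma PC_nonempty:
  assumes x: "x \<in> profinite_carrier G" and N: "N \<in> fin_index_normals G"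
  shows "\<exists>a. a \<in> x N"
  using rcosets_nonempty[OF _ PC_val[OF x N]] NG_props[OF N] by blast

lemma PC_mult_closed:
  assumes x: "x \<in> profinite_carrier G" and y: "y \<in> profinite_carrier G"
  shows "x \<otimes>\<^bsub>profinite_completion G\<^esub> y \<in> profinite_carrier G"
proof -
  have eq: "x \<otimes>\<^bsub>profinite_completion G\<^esub> y = (\<lambda>N\<in>fin_index_normals G. x N <#> y N)"
    by (simp add: profinite_completion_def)
  have val: "x N <#> y N = N #> (a \<otimes> b)" if N: "N \<in> fin_index_normals G" and a: "a \<in> x N" and b: "b \<in> y N" for N a b
    using PC_rep[OF x N a] PC_rep[OF y N b] normal.rcos_sum[of N G a b] NG_props[OF N] by simp
  show ?thesis unfolding eq profinite_carrier_def
  proof (intro CollectI conjI ballI impI)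
    show "(\<lambda>N\<in>fin_index_normals G. x N <#> y N) \<in> (\<Pi>\<^sub>E N\<in>fin_index_normals G. rcosets N)"
    proof
      fix N assume N: "N \<in> fin_index_normals G"
      obtain a where a: "a \<in> x N" using PC_nonempty[OF x N] by blast
      obtain b where b: "b \<in> y N" using PC_nonempty[OF y N] by blast
      show "(\<lambda>N\<in>fin_index_normals G. x N <#> y N) N \<in> rcosets N"
        using val[OF N a b] N rcosetsI'[of N "a \<otimes> b"] NG_props[OF N] PC_rep(2)[OF x N a] PC_rep(2)[OF y N b] by simp
    qed auto
    fix N1 N2 assume N1: "N1 \<in> fin_index_normals G" and N2: "N2 \<in> fin_index_normals G" and le: "N1 \<subseteq> N2"
    obtain a where a: "a \<in> x N1" using PC_nonempty[OF x N1] by blast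
    obtain b where b: "b \<in> y N1" using PC_nonempty[OF y N1] by blast
    have a2: "a \<in> x N2" and b2: "b \<in> y N2" using PC_compat[OF x N1 N2 le] PC_compat[OF y N1 N2 le] a b by auto
    show "(\<lambda>N\<in>fin_index_normals G. x N <#> y N) N1 \<subseteq> (\<lambda>N\<in>fin_index_normals G. x N <#> y N) N2"
      using val[OF N1 a b] val[OF N2 a2 b2] N1 N2 le unfolding r_coset_def by auto
  qed
qed

end

context pc begin

definition nN :: "'a set \<Rightarrow> nat" where "nN N = (LEAST n. L n \<subseteq> N)"

lemma nN: "N \<in> fin_index_normals Hg \<Longrightarrow> L (nN N) \<subseteq> N"
  unfolding nN_def using L_cofinal by (metis LeastI_ex)

lemma nN_le: "L m \<subseteq> N \<Longrightarrow> nN N \<le> m"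
  unfolding nN_def by (rule Least_le)

lemma NH_props: "N \<in> fin_index_normals Hg \<Longrightarrow> subgroup N G \<and> N \<subseteq> H \<and> N \<lhd> Hg"
  unfolding fin_index_normals_def Hg_normal_iff by auto

definition F :: "('a set \<Rightarrow> 'a set) \<Rightarrow> ('a set \<Rightarrow> 'a set)" where
  "F x = (\<lambda>N\<in>fin_index_normals Hg. N <#> psi (nN N) (SOME g. g \<in> x (K (nN N))))"

lemma KL:
  assumes x: "x \<in> profinite_carrier G" and N: "N \<in> fin_index_normals Hg" and Lm: "L m \<subseteq> N"
    and g: "g \<in> x (K m)" and h: "h \<in> H" and ps: "psi m g = L m #> h"
  shows "F x N = N #> h"
proof -
  define n where "n = nN N"
  have nm: "n \<le> m" unfolding n_def using nN_le[OF Lm] .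
  have sub1: "x (K m) \<subseteq> x (K n)" using PC_compat[OF x K_props(1) K_props(1) K_mono[OF nm]] .
  have gn: "g \<in> x (K n)" using g sub1 by blast
  have xK: "x (K n) = K n #> g" and gG: "g \<in> carrier G" using PC_rep[OF x K_props(1) gn] by auto
  define g0 where "g0 = (SOME g. g \<in> x (K n))"
  have g0: "g0 \<in> x (K n)" unfolding g0_def using gn by (rule someI)
  have "psi n g0 = psi n g" using psi_const[OF gG] g0 xK by simp
  also have "\<dots> = L n #> h" using psi_down'[OF nm gG h ps] .
  finally have "F x N = N <#> (L n #> h)" unfolding F_def using N n_def g0_def by simp
  also have "\<dots> = N #> h"
    using setmult_coset_absorb[OF L_props(3) conjunct1[OF NH_props[OF N]] nN[OF N]] h HG n_def by auto
  finally show ?thesis .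
qed

lemma KL_ex:
  assumes x: "x \<in> profinite_carrier G" and N: "N \<in> fin_index_normals Hg" and Lm: "L m \<subseteq> N"
  shows "\<exists>h\<in>H. \<exists>g. g \<in> x (K m) \<and> psi m g = L m #> h \<and> F x N = N #> h"
proof -
  obtain g where g: "g \<in> x (K m)" using PC_nonempty[OF x K_props(1)] by blast
  have gG: "g \<in> carrier G" using PC_rep(2)[OF x K_props(1) g] .
  obtain h where h: "h \<in> H" "psi m g = L m #> h" using psi_val[OF gG] by blast
  show ?thesis using KL[OF x N Lm g h] g h by blast
qed

lemma F_in: "x \<in> profinite_carrier G \<Longrightarrow> F x \<in> profinite_carrier Hg"
  unfolding profinite_carrier_def[of Hg]
proof (intro CollectI conjI ballI impI)
  assume x: "x \<in> profinite_carrier G"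
  show "F x \<in> (\<Pi>\<^sub>E N\<in>fin_index_normals Hg. rcosets\<^bsub>Hg\<^esub> N)"
  proof
    fix N assume N: "N \<in> fin_index_normals Hg"
    obtain h where h: "h \<in> H" "F x N = N #> h" using KL_ex[OF x N nN[OF N]] by blast
    show "F x N \<in> rcosets\<^bsub>Hg\<^esub> N" using h by (auto simp: rcosets_upd)
  qed (simp add: F_def)
  fix N1 N2 assume N1: "N1 \<in> fin_index_normals Hg" and N2: "N2 \<in> fin_index_normals Hg" and le: "N1 \<subseteq> N2"
  define m where "m = max (nN N1) (nN N2)"
  have L1: "L m \<subseteq> N1" using nN[OF N1] L_mono[of "nN N1" m] unfolding m_def by auto
  have L2: "L m \<subseteq> N2" using nN[OF N2] L_mono[of "nN N2" m] unfolding m_def by auto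
  obtain h g where h: "h \<in> H" "g \<in> x (K m)" "psi m g = L m #> h" "F x N1 = N1 #> h"
    using KL_ex[OF x N1 L1] by blast
  have "F x N2 = N2 #> h" using KL[OF x N2 L2 h(2,1,3)] .
  then show "F x N1 \<subseteq> F x N2" using h(4) le unfolding r_coset_def by auto
qed

lemma F_hom: "F \<in> hom (profinite_completion G) (profinite_completion Hg)"
proof (rule homI)
  fix x assume "x \<in> carrier (profinite_completion G)"
  then show "F x \<in> carrier (profinite_completion Hg)"
    using F_in by (simp add: profinite_completion_def)
next
  fix x y assume x0: "x \<in> carrier (profinite_completion G)" and y0: "y \<in> carrier (profinite_completion G)"
  have x: "x \<in> profinite_carrier G" and y: "y \<in> profinite_carrier G"
    using x0 y0 by (simp_all add: profinite_completion_def)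
  define z where "z = x \<otimes>\<^bsub>profinite_completion G\<^esub> y"
  have z: "z \<in> profinite_carrier G" unfolding z_def using PC_mult_closed[OF x y] .
  have zval: "z N = x N <#> y N" if "N \<in> fin_index_normals G" for N
    unfolding z_def using that by (simp add: profinite_completion_def)
  interpret gh: group_hom G "Hg Mod L m" "psi m" for m
    using Q_group psi_hom by (simp add: group_hom_def group_hom_axioms_def is_group)
  have "F z N = F x N <#> F y N" if N: "N \<in> fin_index_normals Hg" for N
  proof -
    define m where "m = nN N"
    have Lm: "L m \<subseteq> N" using nN[OF N] m_def by simp
    obtain h g where h: "h \<in> H" "g \<in> x (K m)" "psi m g = L m #> h" "F x N = N #> h"
      using KL_ex[OF x N Lm] by blast
    obtain h' g' where h': "h' \<in> H" "g' \<in> y (K m)" "psi m g' = L m #> h'" "F y N = N #> h'"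
      using KL_ex[OF y N Lm] by blast
    have gG: "g \<in> carrier G" and g'G: "g' \<in> carrier G"
      using PC_rep(2)[OF x K_props(1) h(2)] PC_rep(2)[OF y K_props(1) h'(2)] by auto
    have gz: "g \<otimes> g' \<in> z (K m)" using zval[OF K_props(1)] h(2) h'(2) unfolding set_mult_def by blast
    have "psi m (g \<otimes> g') = psi m g <#> psi m g'" using gG g'G by simp
    also have "\<dots> = L m #> (h \<otimes> h')" using h(3) h'(3) normal.rcos_sum[OF L_props(4), of h h'] h(1) h'(1) by simp
    finally have "F z N = N #> (h \<otimes> h')"
      using KL[OF z N Lm gz _] h(1) h'(1) subgroup.m_closed[OF sub] by blast
    also have "\<dots> = (N #> h) <#> (N #> h')"
      using normal.rcos_sum[OF conjunct2[OF conjunct2[OF NH_props[OF N]]], of h h'] h(1) h'(1) by simp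
    finally show ?thesis using h(4) h'(4) by simp
  qed
  then show "F (x \<otimes>\<^bsub>profinite_completion G\<^esub> y) = F x \<otimes>\<^bsub>profinite_completion Hg\<^esub> F y"
    unfolding z_def[symmetric] by (auto simp: profinite_completion_def F_def[of z] intro!: ext)
qed

end


context pc begin

lemma topG: "topspace (profinite_topology G) = profinite_carrier G"
  unfolding profinite_topology_def by (auto simp: profinite_carrier_def)

lemma F_cont: "continuous_map (profinite_topology G) (profinite_topology Hg) F"
  unfolding profinite_topology_def[of Hg] continuous_map_in_subtopology
proof (intro conjI)
  show "F \<in> topspace (profinite_topology G) \<rightarrow> profinite_carrier Hg" using F_in topG by auto
  show "continuous_map (profinite_topology G)
     (product_topology (\<lambda>N. discrete_topology (rcosets\<^bsub>Hg\<^esub> N)) (fin_index_normals Hg)) F"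
    unfolding continuous_map_componentwise
  proof (intro conjI ballI)
    show "F ` topspace (profinite_topology G) \<subseteq> extensional (fin_index_normals Hg)"
      by (auto simp: F_def)
    fix N assume N: "N \<in> fin_index_normals Hg"
    define n where "n = nN N"
    define \<Phi> where "\<Phi> c = N <#> psi n (SOME g. g \<in> c)" for c
    have eq: "(\<lambda>x. F x N) = \<Phi> \<circ> (\<lambda>x. x (K n))" using N by (auto simp: F_def \<Phi>_def n_def)
    have c1: "continuous_map (profinite_topology G) (discrete_topology (rcosets (K n))) (\<lambda>x. x (K n))"
      unfolding profinite_topology_def
      using continuous_map_from_subtopology[OF continuous_map_product_projection[where X="\<lambda>N. discrete_topology (rcosets N)", OF K_props(1)[of n]]] by simp
    have c2: "continuous_map (discrete_topology (rcosets (K n))) (discrete_topology (rcosets\<^bsub>Hg\<^esub> N)) \<Phi>"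
      unfolding continuous_map_from_discrete_topology
    proof
      fix c assume c: "c \<in> rcosets (K n)"
      have g0: "(SOME g. g \<in> c) \<in> carrier G"
        using rep_in[OF K_props(3) c] rcosets_subset_carrier[OF K_props(3) c] by blast
      obtain h where h: "h \<in> H" "psi n (SOME g. g \<in> c) = L n #> h" using psi_val[OF g0] by blast
      have "\<Phi> c = N #> h" unfolding \<Phi>_def using h
        setmult_coset_absorb[OF L_props(3) conjunct1[OF NH_props[OF N]] nN[OF N]] HG n_def by auto
      then show "\<Phi> c \<in> topspace (discrete_topology (rcosets\<^bsub>Hg\<^esub> N))" using h by (auto simp: rcosets_upd)
    qed
    show "continuous_map (profinite_topology G) (discrete_topology (rcosets\<^bsub>Hg\<^esub> N)) (\<lambda>x. F x N)"
      unfolding eq by (rule continuous_map_compose[OF c1 c2])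
  qed
qed

lemma L_in_NH_rep:
  assumes y: "y \<in> profinite_carrier Hg"
  shows "\<exists>h\<in>H. y (L n) = L n #> h"
  using PC_val[OF y L_props(1)] by (auto simp: rcosets_upd)

lemma NH_rep:
  assumes y: "y \<in> profinite_carrier Hg" and N: "N \<in> fin_index_normals Hg"
  shows "\<exists>h\<in>H. y N = N #> h"
  using PC_val[OF y N] by (auto simp: rcosets_upd)

lemma F_surj: "F ` profinite_carrier G = profinite_carrier Hg"
proof
  show "F ` profinite_carrier G \<subseteq> profinite_carrier Hg" using F_in by blast
  show "profinite_carrier Hg \<subseteq> F ` profinite_carrier G"
  proof
    fix y assume y: "y \<in> profinite_carrier Hg"
    define A where "A n = {c \<in> rcosets (M n). \<forall>a\<in>c. psi n a = y (L n)}" for n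
    define pm where "pm n c = M n <#> c" for n c
    have constM: "psi n a' = psi n a" if "a \<in> carrier G" "a' \<in> M n #> a" for n a a'
    proof -
      have "a' \<in> K n #> a" using that M_sub_K unfolding r_coset_def by blast
      then show ?thesis using psi_const[OF that(1)] by simp
    qed
    have Afin: "finite (A n)" for n
      using card_M_bound(2)[of n] unfolding A_def by simp
    have Ane: "A n \<noteq> {}" for n
    proof -
      have "y (L n) \<in> carrier (Hg Mod L n)" using PC_val[OF y L_props(1)] Q_carrier by simp
      then obtain a where a: "a \<in> carrier G" "psi n a = y (L n)" using psi_surj by (metis imageE)
      have "M n #> a \<in> A n" unfolding A_def using rcosetsI'[OF M_props(3) a(1)] constM[OF a(1)] a(2) by simp
      then show ?thesis by blast
    qed
    have maps: "pm n c \<in> A n" if c: "c \<in> A (Suc n)" for n c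
    proof -
      obtain a where a: "a \<in> carrier G" "c = M (Suc n) #> a" using c unfolding A_def by (auto elim!: rcosets_elim)
      have ac: "a \<in> c" using rcos_self[OF a(1) M_props(3)] a(2) by simp
      have ps: "psi (Suc n) a = y (L (Suc n))" using c ac unfolding A_def by blast
      obtain h where h: "h \<in> H" "y (L (Suc n)) = L (Suc n) #> h" using L_in_NH_rep[OF y] by blast
      obtain h0 where h0: "h0 \<in> H" "y (L n) = L n #> h0" using L_in_NH_rep[OF y] by blast
      have "psi n a = L n #> h" using psi_down'[of n "Suc n" a h] a h ps by simp
      moreover have "y (L (Suc n)) \<subseteq> y (L n)"
        using PC_compat[OF y L_props(1) L_props(1) L_mono[of n "Suc n"]] by simp
      then have sub2: "L (Suc n) #> h \<subseteq> L n #> h0" using h h0 by simp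
      have LL: "L (Suc n) \<subseteq> L n" using L_mono by simp
      have hG: "h \<in> carrier G" and h0G: "h0 \<in> carrier G" using h(1) h0(1) HG by auto
      have "L n #> h = L n #> h0"
        by (rule coset_subset_eq[OF L_props(3) L_props(3) LL hG h0G sub2])
      ultimately have pa: "psi n a = y (L n)" using h0 by simp
      have "pm n c = M n #> a" unfolding pm_def a(2)
        using setmult_coset_absorb[OF M_props(3) M_props(3) M_mono[of n "Suc n"] a(1)] by simp
      then show ?thesis unfolding A_def using rcosetsI'[OF M_props(3) a(1)] constM[OF a(1)] pa by simp
    qed
    obtain cs where cs: "\<And>n. cs n \<in> A n" "\<And>n. pm n (cs (Suc n)) = cs n"
      using koenig[where A=A and p=pm, OF Afin Ane maps] by blast
    have csR: "cs n \<in> rcosets (M n)" for n using cs(1) unfolding A_def by simp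
    have cspsi: "a \<in> cs n \<Longrightarrow> psi n a = y (L n)" for n a using cs(1) unfolding A_def by simp
    have csrep: "cs n = M n #> a" "a \<in> carrier G" if a: "a \<in> cs n" for n a
    proof -
      obtain b where b: "b \<in> carrier G" "cs n = M n #> b" using csR[of n] by (rule rcosets_elim)
      show "cs n = M n #> a" using repr_independence[OF _ b(1) M_props(3), of a] a b by simp
      show "a \<in> carrier G" using a rcosets_subset_carrier[OF M_props(3) csR[of n]] by blast
    qed
    have csne: "\<exists>a. a \<in> cs n" for n using rcosets_nonempty[OF M_props(3) csR] by blast
    have csstep: "cs (Suc n) \<subseteq> cs n" for n
    proof
      fix z assume z: "z \<in> cs (Suc n)"
      have zG: "z \<in> carrier G" using csrep(2)[OF z] .
      have "z = \<one> \<otimes> z" using zG by simp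
      then have "z \<in> M n <#> cs (Suc n)" using z subgroup.one_closed[OF M_props(3)] unfolding set_mult_def by blast
      then show "z \<in> cs n" using cs(2)[of n] unfolding pm_def by simp
    qed
    have csmono: "cs (n + d) \<subseteq> cs n" for n d
      by (induction d) (use csstep in auto)
    have csmono': "n \<le> m \<Longrightarrow> cs m \<subseteq> cs n" for n m
      using csmono[of n "m - n"] by simp
    define idx where "idx N = card (rcosets N)" for N
    define x where "x = (\<lambda>N\<in>fin_index_normals G. N <#> cs (idx N))"
    have xval: "x N = N #> a" if N: "N \<in> fin_index_normals G" and a: "a \<in> cs (idx N)" for N a
    proof -
      have "cs (idx N) = M (idx N) #> a" "a \<in> carrier G" using csrep[OF a] by auto
      moreover have "M (idx N) \<subseteq> N" using M_sub[OF N] idx_def by simp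
      ultimately show ?thesis unfolding x_def using N
        setmult_coset_absorb[OF M_props(3) conjunct1[OF conjunct2[OF NG_props[OF N]]]] by simp
    qed
    have xPC: "x \<in> profinite_carrier G" unfolding profinite_carrier_def
    proof (intro CollectI conjI ballI impI)
      show "x \<in> (\<Pi>\<^sub>E N\<in>fin_index_normals G. rcosets N)"
      proof
        fix N assume N: "N \<in> fin_index_normals G"
        obtain a where a: "a \<in> cs (idx N)" using csne by blast
        show "x N \<in> rcosets N" using xval[OF N a] rcosetsI'[OF _ csrep(2)[OF a]] NG_props[OF N] by simp
      qed (simp add: x_def)
      fix N1 N2 assume N1: "N1 \<in> fin_index_normals G" and N2: "N2 \<in> fin_index_normals G" and le: "N1 \<subseteq> N2"
      obtain a where a: "a \<in> cs (max (idx N1) (idx N2))" using csne by blast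
      have a1: "a \<in> cs (idx N1)" and a2: "a \<in> cs (idx N2)"
        using a csmono'[of "idx N1" "max (idx N1) (idx N2)"] csmono'[of "idx N2" "max (idx N1) (idx N2)"] by auto
      show "x N1 \<subseteq> x N2" using xval[OF N1 a1] xval[OF N2 a2] le unfolding r_coset_def by auto
    qed
    have "F x = y"
    proof (rule extensionalityI[OF _ PC_ext[OF y]])
      show "F x \<in> extensional (fin_index_normals Hg)" by (simp add: F_def)
      fix N assume N: "N \<in> fin_index_normals Hg"
      define n where "n = nN N"
      obtain a where a: "a \<in> cs (max n (idx (K n)))" using csne by blast
      have a1: "a \<in> cs n" and a2: "a \<in> cs (idx (K n))"
        using a csmono'[of n "max n (idx (K n))"] csmono'[of "idx (K n)" "max n (idx (K n))"] by auto
      have aG: "a \<in> carrier G" using csrep(2)[OF a1] .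
      have xK: "x (K n) = K n #> a" using xval[OF K_props(1) a2] .
      have ax: "a \<in> x (K n)" using xK rcos_self[OF aG K_props(3)] by simp
      obtain h where h: "h \<in> H" "y (L n) = L n #> h" using L_in_NH_rep[OF y] by blast
      have ps: "psi n a = L n #> h" using cspsi[OF a1] h by simp
      have Fx: "F x N = N #> h" using KL[OF xPC N _ ax h(1) ps] nN[OF N] n_def by simp
      obtain h0 where h0: "h0 \<in> H" "y N = N #> h0" using NH_rep[OF y N] by blast
      have "y (L n) \<subseteq> y N" using PC_compat[OF y L_props(1) N nN[OF N]] n_def by simp
      then have sub2: "L (nN N) #> h \<subseteq> N #> h0" using h h0 n_def by simp
      have hG: "h \<in> carrier G" and h0G: "h0 \<in> carrier G" using h(1) h0(1) HG by auto
      have "N #> h = N #> h0"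
        by (rule coset_subset_eq[OF L_props(3) conjunct1[OF NH_props[OF N]] nN[OF N] hG h0G sub2])
      then show "F x N = y N" using Fx h0 by simp
    qed
    then show "y \<in> F ` profinite_carrier G" using xPC by blast
  qed
qed

lemma ker_M:
  assumes x: "x \<in> kernel (profinite_completion G) (profinite_completion Hg) F"
  shows "x (M n) \<in> rcosets (M n)" "x (M n) \<subseteq> K n"
proof -
  have xPC: "x \<in> profinite_carrier G" and Fx: "F x = (\<lambda>N\<in>fin_index_normals Hg. N)"
    using x by (auto simp: kernel_def profinite_completion_def)
  show "x (M n) \<in> rcosets (M n)" using PC_val[OF xPC M_props(1)] .
  obtain a where a: "a \<in> x (M n)" using PC_nonempty[OF xPC M_props(1)] by blast
  have aK: "a \<in> x (K n)" using a PC_compat[OF xPC M_props(1)[of n] K_props(1)[of n] M_sub_K[of n]] by blast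
  have aG: "a \<in> carrier G" using PC_rep(2)[OF xPC M_props(1) a] .
  obtain h where h: "h \<in> H" "psi n a = L n #> h" using psi_val[OF aG] by blast
  have hG: "h \<in> carrier G" using h HG by blast
  have "F x (L n) = L n #> h" using KL[OF xPC L_props(1) order_refl aK h] .
  moreover have "F x (L n) = L n" using Fx L_props(1) by simp
  ultimately have "h \<in> L n" using coset_join1[OF _ hG L_props(3)] by simp
  then have "psi n a = L n" using h(2) coset_join2[OF hG L_props(3)] by simp
  then have "a \<in> K n" using K_mem aG by simp
  then have "x (K n) = K n" using PC_rep(1)[OF xPC K_props(1) aK] coset_join2[OF aG K_props(3)] by simp
  then show "x (M n) \<subseteq> K n" using PC_compat[OF xPC M_props(1)[of n] K_props(1)[of n] M_sub_K[of n]] by simp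
qed

lemma sep:
  assumes x: "x \<in> profinite_carrier G" and x': "x' \<in> profinite_carrier G" and ne: "x \<noteq> x'"
  shows "\<exists>n. \<forall>m\<ge>n. x (M m) \<noteq> x' (M m)"
proof -
  obtain N where N: "N \<in> fin_index_normals G" "x N \<noteq> x' N"
    using ne PC_ext[OF x] PC_ext[OF x'] extensionalityI by metis
  have "x (M m) \<noteq> x' (M m)" if m: "m \<ge> card (rcosets N)" for m
  proof
    assume eq: "x (M m) = x' (M m)"
    have MN: "M m \<subseteq> N" using M_sub[OF N(1) m] .
    obtain a where a: "a \<in> x (M m)" using PC_nonempty[OF x M_props(1)] by blast
    have "a \<in> x N" "a \<in> x' N" using a eq PC_compat[OF x M_props(1) N(1) MN] PC_compat[OF x' M_props(1) N(1) MN] by auto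
    then have "x N = x' N" using PC_rep(1)[OF x N(1)] PC_rep(1)[OF x' N(1)] by metis
    then show False using N(2) by simp
  qed
  then show ?thesis by blast
qed

lemma F_kernel_finite: "finite (kernel (profinite_completion G) (profinite_completion Hg) F)"
proof (rule ccontr)
  let ?Ker = "kernel (profinite_completion G) (profinite_completion Hg) F"
  let ?d = "card (rcosets H)"
  assume inf: "infinite ?Ker"
  obtain Xs where X: "Xs \<subseteq> ?Ker" "finite Xs" "card Xs = Suc ?d"
    using infinite_arbitrarily_large[OF inf] by blast
  have XPC: "Xs \<subseteq> profinite_carrier G" using X(1) by (auto simp: kernel_def profinite_completion_def)
  let ?P = "{p \<in> Xs \<times> Xs. fst p \<noteq> snd p}"
  have exn: "\<exists>n. \<forall>m\<ge>n. fst p (M m) \<noteq> snd p (M m)" if p: "p \<in> ?P" for p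
  proof -
    have "fst p \<in> profinite_carrier G" "snd p \<in> profinite_carrier G" "fst p \<noteq> snd p"
      using p XPC by auto
    then show ?thesis by (rule sep)
  qed
  define nn where "nn p = (SOME n. \<forall>m\<ge>n. fst p (M m) \<noteq> snd p (M m))"
    for p :: "('a set \<Rightarrow> 'a set) \<times> ('a set \<Rightarrow> 'a set)"
  have nn: "fst p (M m) \<noteq> snd p (M m)" if "p \<in> ?P" "m \<ge> nn p" for p m
    using someI_ex[OF exn[OF that(1)]] that(2) unfolding nn_def by blast
  define n0 where "n0 = Max (insert 0 (nn ` ?P))"
  have fP: "finite ?P" using X(2) by simp
  have n0: "nn p \<le> n0" if "p \<in> ?P" for p unfolding n0_def using fP that by simp
  have inj: "inj_on (\<lambda>x. x (M n0)) Xs"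
  proof (rule inj_onI, rule ccontr)
    fix x x' assume x: "x \<in> Xs" and x': "x' \<in> Xs" and eq: "x (M n0) = x' (M n0)" and ne: "x \<noteq> x'"
    have "(x, x') \<in> ?P" using x x' ne by simp
    then show False using nn[of "(x, x')" n0] n0 eq by simp
  qed
  have img: "(\<lambda>x. x (M n0)) ` Xs \<subseteq> {c \<in> rcosets (M n0). c \<subseteq> K n0}"
  proof
    fix c assume "c \<in> (\<lambda>x. x (M n0)) ` Xs"
    then obtain x where x: "x \<in> Xs" "c = x (M n0)" by blast
    have xk: "x \<in> ?Ker" using x(1) X(1) by blast
    show "c \<in> {c \<in> rcosets (M n0). c \<subseteq> K n0}" using ker_M[OF xk] x(2) by simp
  qed
  have "card Xs \<le> card {c \<in> rcosets (M n0). c \<subseteq> K n0}"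
    using card_inj_on_le[OF inj img] card_M_bound(2)[of n0] by simp
  then show False using kcount[of n0] X(3) by simp
qed

lemma main:
  "\<exists>f. f \<in> hom (profinite_completion G) (profinite_completion (G\<lparr>carrier := H\<rparr>))
     \<and> f ` carrier (profinite_completion G) = carrier (profinite_completion (G\<lparr>carrier := H\<rparr>))
     \<and> continuous_map (profinite_topology G) (profinite_topology (G\<lparr>carrier := H\<rparr>)) f
     \<and> finite (kernel (profinite_completion G) (profinite_completion (G\<lparr>carrier := H\<rparr>)) f)"
proof (rule exI[of _ F], intro conjI)
  show "F \<in> hom (profinite_completion G) (profinite_completion (G\<lparr>carrier := H\<rparr>))" by (rule F_hom)
  have "carrier (profinite_completion G) = profinite_carrier G"
    "carrier (profinite_completion (G\<lparr>carrier := H\<rparr>)) = profinite_carrier (G\<lparr>carrier := H\<rparr>)"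
    by (simp_all add: profinite_completion_def)
  then show "F ` carrier (profinite_completion G) = carrier (profinite_completion (G\<lparr>carrier := H\<rparr>))"
    using F_surj by simp
  show "continuous_map (profinite_topology G) (profinite_topology (G\<lparr>carrier := H\<rparr>)) F" by (rule F_cont)
  show "finite (kernel (profinite_completion G) (profinite_completion (G\<lparr>carrier := H\<rparr>)) F)"
    by (rule F_kernel_finite)
qed

end

theorem propositionC:
  fixes G :: "('a, 'b) monoid_scheme" and H :: "'a set"
  assumes "group G"
    and "fin_generated G"
    and "residually_finite G"
    and "subgroup H G"
    and "finite (rcosets\<^bsub>G\<^esub> H)"
    and "\<forall>N\<in>fin_index_normals (G\<lparr>carrier := H\<rparr>).
           \<exists>M\<in>fin_index_normals G. (G\<lparr>carrier := H\<rparr> Mod N) \<cong> (G Mod M)"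
  shows "\<exists>f. f \<in> hom (profinite_completion G) (profinite_completion (G\<lparr>carrier := H\<rparr>))
           \<and> f ` carrier (profinite_completion G) = carrier (profinite_completion (G\<lparr>carrier := H\<rparr>))
           \<and> continuous_map (profinite_topology G) (profinite_topology (G\<lparr>carrier := H\<rparr>)) f
           \<and> finite (kernel (profinite_completion G) (profinite_completion (G\<lparr>carrier := H\<rparr>)) f)"
proof -
  have "pc G H" unfolding pc_def pc_axioms_def using assms by blast
  then show ?thesis by (rule pc.main)
qed

end
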